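(* Let $1\leq p<\infty$ and let $N>2$ be an integer. For each integer $i$ with $1\leq i\leq N$, let $T_i=T_{f_i,w^{(i)}}$ be the bilateral weighted pseudo-shift on $\ell^p(\mathbb{Z})$ induced by an invertible map $f_i:\mathbb{Z}\to\mathbb{Z}$ and a bounded nonzero weight sequence $w^{(i)}=(w^{(i)}_m)_{m\in\mathbb{Z}}$. For $m\in\mathbb{Z}$ and $n\in\mathbb{N}$ let $W^{(i)}_{m,n}=\prod_{v=1}^{n}w^{(i)}_{f_i^{v}(m)}$ and $W^{(i)}_{m,-n}=\prod_{v=0}^{n-1}w^{(i)}_{f_i^{-v}(m)}$. Suppose that there exists a strictly increasing sequence $(n_k)_{k\in\mathbb{N}}$ of positive integers such that: (a) for each integer $i$ with $1\leq i\leq N$ and each $m\in\mathbb{Z}$, $|W^{(i)}_{m,n_k}|\to\infty$ and $|W^{(i)}_{m,-n_k}|\to 0$ as $k\to\infty$; and (b) for each $\varepsilon>0$, integers $K,M\in\mathbb{N}$, and finite collection $\{a^{(i)}_j:-M\leq j\leq M,\ 1\leq i\leq N\}$ of nonzero scalars in $\mathbb{K}\setminus\{0\}$, there exists an integer $k\geq K$ such that for all integers $i,\ell$ with $1\leq i,\ell\leq N$ and $i\neq\ell$, \[\left|\frac{W^{(i)}_{f_i^{-n_k}(j),n_k}}{W^{(\ell)}_{f_\ell^{-n_k}(j),n_k}}\right|<\varepsilon\quad\text{whenever } j\in f_\ell^{n_k}([M])\cap f_i^{n_k}(\mathbb{Z}\setminus[M]),\] and \[\left|\frac{W^{(i)}_{f_i^{-n_k}(j),n_k}}{W^{(\ell)}_{f_\ell^{-n_k}(j),n_k}}-\frac{a^{(i)}_{f_i^{-n_k}(j)}}{a^{(\ell)}_{f_\ell^{-n_k}(j)}}\right|<\varepsilon\quad\text{whenever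 } j\in f_\ell^{n_k}([M])\cap f_i^{n_k}([M]),\] where $[M]=\{-M,-M+1,\dots,0,\dots,M\}$. Then $T_1,\dots,T_N$ satisfy the Disjoint Blow-up/Collapse Criterion. In particular, $T_1,\dots,T_N$ are disjoint hypercyclic.
   Context: $\mathbb{K}$ denotes the scalar field ($\mathbb{R}$ or $\mathbb{C}$); $(e_j)_{j\in\mathbb{Z}}$ is the canonical basis of $\ell^p(\mathbb{Z})$. Bilateral weighted pseudo-shift: given an invertible map $f:\mathbb{Z}\to\mathbb{Z}$ and a bounded nonzero weight sequence $w=(w_j)_{j\in\mathbb{Z}}$, $T_{f,w}\big(\sum_{j\in\mathbb{Z}}x_je_j\big)=\sum_{j\in\mathbb{Z}}w_{f(j)}x_{f(j)}e_j$; thus $T_{f,w}^n e_m=W_{m,-n}e_{f^{-n}(m)}$ and $T_{f,w}^n e_{f^n(m)}=W_{m,n}e_m$. Operators $T_1,\dots,T_N$ ($N\geq 2$) on a separable Banach space $X$ are disjoint hypercyclic if there is $x\in X$ such that $\{(T_1^nx,\dots,T_N^nx):n\in\mathbb{N}\}$ is dense in $X^N$. Disjoint Blow-up/Collapse Criterion: operators $T_1,\dots,T_N\in\mathcal{L}(X)$ ($N\ge 2$) satisfy it if there exist a strictly increasing sequence $(n_k)$ of positive integers, a dense subset $X_0\subset X$ and maps $S_k:\bigoplus_{i=1}^N X_0\to X$ such that (i) for each $x\in X_0$ and $1\leq i\leq N$, $T_i^{n_k}x\to 0$ as $k\to\infty$; (ii) for each $\varepsilon>0$, integer $K\in\mathbb{N}$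 and $x_1,\dots,x_N\in X_0$ there is an integer $k\geq K$ with $\|S_k(x_1,\dots,x_N)\|<\varepsilon$ and $\|T_i^{n_k}S_k(x_1,\dots,x_N)-x_i\|<\varepsilon$ for $1\leq i\leq N$. *)

theory Defs
  imports "HOL-Analysis.Analysis"
begin

definition lp :: "real \<Rightarrow> (int \<Rightarrow> 'a::real_normed_vector) set" where
  "lp p = {x. (\<lambda>j. norm (x j) powr p) summable_on UNIV}"

definition lp_norm :: "real \<Rightarrow> (int \<Rightarrow> 'a::real_normed_vector) \<Rightarrow> real" where
  "lp_norm p x = (\<Sum>\<^sub>\<infinity>j. norm (x j) powr p) powr (1 / p)"

definition pseudo_shift :: "(int \<Rightarrow> int) \<Rightarrow> (int \<Rightarrow> 'a::real_normed_field) \<Rightarrow> (int \<Rightarrow> 'a) \<Rightarrow> (int \<Rightarrow> 'a)" where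
  "pseudo_shift f w x = (\<lambda>j. w (f j) * x (f j))"

definition Wpos :: "(int \<Rightarrow> int) \<Rightarrow> (int \<Rightarrow> 'a::real_normed_field) \<Rightarrow> int \<Rightarrow> nat \<Rightarrow> 'a" where
  "Wpos f w m n = (\<Prod>v\<in>{1..n}. w ((f ^^ v) m))"

definition Wneg :: "(int \<Rightarrow> int) \<Rightarrow> (int \<Rightarrow> 'a::real_normed_field) \<Rightarrow> int \<Rightarrow> nat \<Rightarrow> 'a" where
  "Wneg f w m n = (\<Prod>v\<in>{0..<n}. w ((inv f ^^ v) m))"

definition bounded_linear_lp :: "real \<Rightarrow> ((int \<Rightarrow> 'a::real_normed_field) \<Rightarrow> (int \<Rightarrow> 'a)) \<Rightarrow> bool" where
  "bounded_linear_lp p T \<longleftrightarrow>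
     (\<forall>x\<in>lp p. T x \<in> lp p) \<and>
     (\<forall>x\<in>lp p. \<forall>y\<in>lp p. T (\<lambda>j. x j + y j) = (\<lambda>j. T x j + T y j)) \<and>
     (\<forall>c. \<forall>x\<in>lp p. T (\<lambda>j. c * x j) = (\<lambda>j. c * T x j)) \<and>
     (\<exists>C. \<forall>x\<in>lp p. lp_norm p (T x) \<le> C * lp_norm p x)"

definition disjoint_hypercyclic :: "real \<Rightarrow> nat \<Rightarrow> (nat \<Rightarrow> (int \<Rightarrow> 'a::real_normed_field) \<Rightarrow> (int \<Rightarrow> 'a)) \<Rightarrow> bool" where
  "disjoint_hypercyclic p N T \<longleftrightarrow>
     (\<exists>x\<in>lp p. \<forall>y. (\<forall>i\<in>{1..N}. y i \<in> lp p) \<longrightarrow>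
        (\<forall>\<epsilon>>0. \<exists>n::nat. \<forall>i\<in>{1..N}. lp_norm p (\<lambda>j. (T i ^^ n) x j - y i j) < \<epsilon>))"

text \<open>Tuples \<open>(x_1,\<dots>,x_N)\<close> are functions \<open>nat \<Rightarrow> _\<close> of which indices \<open>1..N\<close> are used.\<close>

definition dBC_criterion :: "real \<Rightarrow> nat \<Rightarrow> (nat \<Rightarrow> (int \<Rightarrow> 'a::real_normed_field) \<Rightarrow> (int \<Rightarrow> 'a)) \<Rightarrow> bool" where
  "dBC_criterion p N T \<longleftrightarrow>
     (\<forall>i\<in>{1..N}. bounded_linear_lp p (T i)) \<and>
     (\<exists>(nk::nat \<Rightarrow> nat) X0 (S::nat \<Rightarrow> (nat \<Rightarrow> int \<Rightarrow> 'a) \<Rightarrow> (int \<Rightarrow> 'a)).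
        strict_mono nk \<and> (\<forall>k. 0 < nk k) \<and>
        X0 \<subseteq> lp p \<and>
        (\<forall>y\<in>lp p. \<forall>\<epsilon>>0. \<exists>x\<in>X0. lp_norm p (\<lambda>j. x j - y j) < \<epsilon>) \<and>
        (\<forall>k xs. (\<forall>i\<in>{1..N}. xs i \<in> X0) \<longrightarrow> S k xs \<in> lp p) \<and>
        (\<forall>x\<in>X0. \<forall>i\<in>{1..N}. (\<lambda>k. lp_norm p ((T i ^^ nk k) x)) \<longlonglongrightarrow> 0) \<and>
        (\<forall>\<epsilon>>0. \<forall>K::nat. \<forall>xs. (\<forall>i\<in>{1..N}. xs i \<in> X0) \<longrightarrow>
           (\<exists>k\<ge>K. lp_norm p (S k xs) < \<epsilon> \<and>
              (\<forall>i\<in>{1..N}. lp_norm p (\<lambda>j. (T i ^^ nk k) (S k xs) j - xs i j) < \<epsilon>))))"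

end

theory Submission
  imports Defs "HOL-Computational_Algebra.Fundamental_Theorem_Algebra"
begin

lemma map_poly_of_real_mult:
  "map_poly (of_real :: real \<Rightarrow> 'b::{real_algebra_1,comm_ring_1}) (p * q) = map_poly of_real p * map_poly of_real q"
  by (rule poly_eqI) (simp add: coeff_map_poly coeff_mult of_real_sum)

lemma map_poly_cnj_mult: "map_poly cnj (p * q) = map_poly cnj p * map_poly cnj q"
  by (rule poly_eqI) (simp add: coeff_map_poly coeff_mult cnj_sum)

lemma map_poly_of_real_prod:
  "map_poly (of_real :: real \<Rightarrow> 'b::{real_algebra_1,comm_ring_1}) (\<Prod>i\<in>A. P i) = (\<Prod>i\<in>A. map_poly of_real (P i))"
  by (induction A rule: infinite_finite_induct) (auto simp: map_poly_of_real_mult)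

lemma map_poly_cnj_prod:
  "map_poly cnj (\<Prod>i\<in>A. P i) = (\<Prod>i\<in>A. map_poly cnj (P i))"
  by (induction A rule: infinite_finite_induct) (auto simp: map_poly_cnj_mult)

lemma map_poly_of_real_power:
  "map_poly (of_real :: real \<Rightarrow> 'b::{real_algebra_1,comm_ring_1}) (p ^ n) = map_poly of_real p ^ n"
  by (induction n) (auto simp: map_poly_of_real_mult)

lemma map_poly_of_real_add:
  "map_poly (of_real :: real \<Rightarrow> 'b::{real_algebra_1,comm_ring_1}) (p + q) = map_poly of_real p + map_poly of_real q"
  by (rule poly_eqI) (simp add: coeff_map_poly)

lemma map_poly_of_real_inj:
  assumes "map_poly (of_real :: real \<Rightarrow> complex) p = map_poly of_real q"
  shows "p = q"
proof (rule poly_eqI)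
  fix k
  have "coeff (map_poly (of_real :: real \<Rightarrow> complex) p) k = coeff (map_poly of_real q) k"
    using assms by simp
  then show "coeff p k = coeff q k" by (simp add: coeff_map_poly)
qed

lemma map_poly_cnj_real: "map_poly cnj (map_poly (of_real :: real \<Rightarrow> complex) p) = map_poly of_real p"
  by (rule poly_eqI) (simp add: coeff_map_poly)

definition Qp :: "complex \<Rightarrow> real poly" where
  "Qp a = [:(cmod a)^2, -2 * Re a, 1:]"

lemma Qp_factor: "map_poly of_real (Qp a) = [:-a, 1:] * [:- cnj a, 1:]"
proof -
  have "(cmod a)^2 = (Re a)^2 + (Im a)^2" by (simp add: cmod_power2)
  then show ?thesis
    by (simp add: Qp_def map_poly_pCons complex_eq_iff power2_eq_square algebra_simps)
qed

lemma ostrowski_key: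
  fixes \<xi> :: "'a::real_normed_field"
  defines "E \<equiv> \<lambda>p. poly (map_poly (of_real :: real \<Rightarrow> 'a) p) \<xi>"
  assumes minall: "\<And>z. m \<le> norm (E (Qp z))"
    and z0: "norm (E (Qp z0)) = m"
    and eps: "\<epsilon> > 0" and n: "n \<ge> 1"
    and z1: "poly (map_poly of_real (Qp z0)) z1 = - (of_real \<epsilon> :: complex)"
  shows "norm (E (Qp z1)) * m ^ (2*n - 1) \<le> (m ^ n + \<epsilon> ^ n)^2"
proof -
  define Gr where "Gr = Qp z0 ^ n + [: - ((-\<epsilon>)^n) :]"
  define Gc where "Gc = (map_poly of_real Gr :: complex poly)"
  have dQ: "degree (Qp z0) = 2" by (simp add: Qp_def)
  have lQ: "lead_coeff (Qp z0) = 1" by (simp add: Qp_def)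
  have Q0: "Qp z0 \<noteq> 0" using dQ by auto
  have dP: "degree (Qp z0 ^ n) = 2*n" using degree_power_eq[OF Q0, of n] dQ by simp
  have dG: "degree Gr = 2*n" unfolding Gr_def using dP n by (subst degree_add_eq_left) auto
  have "lead_coeff Gr = coeff (Qp z0 ^ n) (2*n) + coeff [: - ((-\<epsilon>)^n) :] (2*n)"
    using dG by (simp add: Gr_def)
  also have "\<dots> = 1"
  proof -
    have "coeff [: - ((-\<epsilon>)^n) :] (2*n) = 0" using n by (cases "2*n") auto
    moreover have "coeff (Qp z0 ^ n) (2*n) = 1" using dP lQ lead_coeff_power[of "Qp z0" n] by simp
    ultimately show ?thesis by simp
  qed
  finally have lG: "lead_coeff Gr = 1" .
  have dGc: "degree Gc = 2*n" unfolding Gc_def using dG by (subst degree_map_poly) auto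
  have lGc: "lead_coeff Gc = 1" unfolding Gc_def using lG by (subst lead_coeff_map_poly_nz) auto
  obtain r where r: "smult (lead_coeff Gc) (\<Prod>i<degree Gc. [:-r i, 1:]) = Gc"
    using complex_poly_decompose' by blast
  hence Gc_eq: "Gc = (\<Prod>i<2*n. [:-r i, 1:])" using dGc lGc by simp
  have cG: "map_poly cnj Gc = Gc" unfolding Gc_def by (rule map_poly_cnj_real)
  have "Gc * Gc = Gc * map_poly cnj Gc" using cG by simp
  also have "\<dots> = (\<Prod>i<2*n. [:-r i, 1:]) * (\<Prod>i<2*n. [:-cnj (r i), 1:])"
    by (subst (2) Gc_eq, subst Gc_eq) (simp add: map_poly_cnj_prod map_poly_pCons)
  also have "\<dots> = (\<Prod>i<2*n. map_poly of_real (Qp (r i)))" by (simp only: prod.distrib[symmetric] Qp_factor)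
  also have "\<dots> = map_poly of_real (\<Prod>i<2*n. Qp (r i))" by (simp add: map_poly_of_real_prod)
  finally have "map_poly of_real (Gr * Gr) = (map_poly of_real (\<Prod>i<2*n. Qp (r i)) :: complex poly)"
    unfolding Gc_def map_poly_of_real_mult .
  hence GG: "Gr * Gr = (\<Prod>i<2*n. Qp (r i))" by (rule map_poly_of_real_inj)
  have Emult: "E (p*q) = E p * E q" for p q by (simp add: E_def map_poly_of_real_mult)
  have Eprod: "E (\<Prod>i\<in>A. P i) = (\<Prod>i\<in>A. E (P i))" for A :: "nat set" and P
    by (simp add: E_def map_poly_of_real_prod poly_prod)
  have "norm (E Gr)^2 = norm (E (Gr * Gr))" by (simp add: Emult norm_mult power2_eq_square)
  also have "\<dots> = (\<Prod>i<2*n. norm (E (Qp (r i))))" by (simp add: GG Eprod prod_norm)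
  finally have nG: "norm (E Gr)^2 = (\<Prod>i<2*n. norm (E (Qp (r i))))" .
  have "poly Gc z1 = 0" unfolding Gc_def Gr_def
    by (simp add: map_poly_of_real_add map_poly_of_real_power z1 map_poly_pCons)
  hence "(\<Prod>i<2*n. poly [:-r i, 1:] z1) = 0" using Gc_eq by (simp add: poly_prod)
  then obtain i0 where i0: "i0 < 2*n" "r i0 = z1" by (auto simp: prod_zero_iff)
  have m0: "m \<ge> 0" using z0 by auto
  have "(\<Prod>i<2*n. norm (E (Qp (r i)))) = norm (E (Qp (r i0))) * (\<Prod>i\<in>{..<2*n}-{i0}. norm (E (Qp (r i))))"
    using i0 by (subst prod.remove[of _ i0]) auto
  also have "\<dots> \<ge> norm (E (Qp z1)) * m ^ (2*n-1)"
  proof -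
    have "(\<Prod>i\<in>{..<2*n}-{i0}. norm (E (Qp (r i)))) \<ge> (\<Prod>i\<in>{..<2*n}-{i0}. m)"
      by (rule prod_mono) (use m0 minall in auto)
    moreover have "(\<Prod>i\<in>{..<2*n}-{i0}. m) = m ^ (2*n-1)" using i0 by simp
    ultimately show ?thesis using i0 by (auto intro: mult_left_mono)
  qed
  finally have low: "norm (E (Qp z1)) * m ^ (2*n-1) \<le> norm (E Gr)^2" using nG by simp
  have "E Gr = E (Qp z0) ^ n - of_real ((-\<epsilon>)^n)"
    by (simp add: E_def Gr_def map_poly_of_real_add map_poly_of_real_power map_poly_pCons)
  hence "norm (E Gr) \<le> norm (E (Qp z0)) ^ n + norm (of_real ((-\<epsilon>)^n) :: 'a)"
    by (metis norm_power norm_triangle_ineq4)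
  also have "\<dots> = m ^ n + \<epsilon> ^ n" using z0 eps by (simp add: norm_power)
  finally have "norm (E Gr)^2 \<le> (m ^ n + \<epsilon> ^ n)^2" by (simp add: power_mono)
  with low show ?thesis by linarith
qed

lemma normed_field_quadratic:
  fixes \<xi> :: "'a::real_normed_field"
  shows "\<exists>b c::real. \<xi>^2 + of_real b * \<xi> + of_real c = 0"
proof -
  define E where "E \<equiv> \<lambda>p. poly (map_poly (of_real :: real \<Rightarrow> 'a) p) \<xi>"
  define \<phi> where "\<phi> z = norm (E (Qp z))" for z
  have Eq: "E (Qp z) = \<xi>^2 - of_real (2 * Re z) * \<xi> + of_real ((cmod z)^2)" for z
    by (simp add: E_def Qp_def map_poly_pCons power2_eq_square algebra_simps)
  have cont: "continuous_on A \<phi>" for A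
    unfolding \<phi>_def Eq by (intro continuous_intros)
  define R where "R = 3 * norm \<xi> + 1"
  have R0: "R > 0" by (simp add: R_def add_nonneg_pos)
  have phi0: "\<phi> 0 = norm \<xi> ^ 2" by (simp add: \<phi>_def Eq norm_power)
  have coer: "\<phi> z > \<phi> 0" if zR: "cmod z > R" for z
  proof -
    define A where "A = \<xi>^2"
    define B where "B = (of_real (2 * Re z) * \<xi> :: 'a)"
    define C where "C = (of_real ((cmod z)^2) :: 'a)"
    have "norm C \<le> norm (A - B + C) + norm (B - A)"
    proof -
      have "C = (A - B + C) + (B - A)" by simp
      thus ?thesis by (metis norm_triangle_ineq)
    qed
    also have "norm (B - A) \<le> norm B + norm A" by (rule norm_triangle_ineq4)
    finally have "norm C \<le> norm (A - B + C) + norm B + norm A" by simp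
    moreover have "norm C = (cmod z)^2" by (simp add: C_def norm_power)
    moreover have "norm A = norm \<xi> ^ 2" by (simp add: A_def norm_power)
    moreover have "norm B \<le> 2 * cmod z * norm \<xi>"
      by (simp add: B_def norm_mult mult_right_mono abs_Re_le_cmod)
    ultimately have low: "\<phi> z \<ge> (cmod z)^2 - norm \<xi>^2 - 2 * cmod z * norm \<xi>"
      by (simp add: \<phi>_def Eq A_def B_def C_def)
    define t where "t = cmod z"
    define a where "a = norm \<xi>"
    have a0: "a \<ge> 0" by (simp add: a_def)
    have t: "t > 3*a + 1" using zR by (simp add: t_def a_def R_def)
    have "t * (t - 2*a) \<ge> (3*a+1) * (a+1)"
      by (rule mult_mono) (use t a0 in auto)
    moreover have "(3*a+1)*(a+1) = 3*(a*a) + 4*a + 1" by (simp add: algebra_simps)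
    moreover have "t*(t-2*a) = t*t - 2*(t*a)" by (simp add: algebra_simps)
    moreover have "a*a \<ge> 0" using a0 by simp
    ultimately have "t^2 - a^2 - 2*t*a > a^2" using a0 unfolding power2_eq_square by linarith
    with low phi0 show ?thesis by (simp add: t_def a_def)
  qed
  obtain zm where zm: "zm \<in> cball 0 R" "\<forall>y\<in>cball 0 R. \<phi> zm \<le> \<phi> y"
  proof -
    have "cball (0::complex) R \<noteq> {}" using R0 by auto
    from continuous_attains_inf[OF compact_cball this cont] show ?thesis using that by blast
  qed
  define m where "m = \<phi> zm"
  have minall: "m \<le> \<phi> z" for z
  proof (cases "cmod z \<le> R")
    case True thus ?thesis using zm by (simp add: m_def)
  next
    case False
    have "\<phi> zm \<le> \<phi> 0" using zm(2) R0 by simp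
    thus ?thesis using False coer[of z] by (simp add: m_def)
  qed
  define S where "S = cball 0 R \<inter> {z. \<phi> z = m}"
  have "closed {z. \<phi> z = m}" by (rule closed_Collect_eq[OF cont continuous_on_const])
  hence cS: "compact S" unfolding S_def by (intro compact_Int_closed compact_cball)
  have "zm \<in> S" using zm by (simp add: S_def m_def)
  hence "S \<noteq> {}" by auto
  then obtain z0 where z0: "z0 \<in> S" "\<forall>y\<in>S. cmod y \<le> cmod z0"
    using continuous_attains_sup[OF cS _ continuous_on_norm[OF continuous_on_id]] by auto
  have pz0: "\<phi> z0 = m" using z0 by (simp add: S_def)
  have m0: "m \<ge> 0" by (simp add: m_def \<phi>_def)
  have "m = 0"
  proof (rule ccontr)
    assume "m \<noteq> 0"
    hence mpos: "m > 0" using m0 by simp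
    define \<epsilon> where "\<epsilon> = m / 2"
    have eps: "\<epsilon> > 0" using mpos by (simp add: \<epsilon>_def)
    define s where "s = sqrt ((Im z0)^2 + \<epsilon>)"
    have s2: "s^2 = (Im z0)^2 + \<epsilon>" unfolding s_def using eps by simp
    define z1 where "z1 = Complex (Re z0) s"
    have c0: "(cmod z0)^2 = (Re z0)^2 + (Im z0)^2" by (simp add: cmod_power2)
    have c1: "(cmod z1)^2 = (Re z0)^2 + s^2" by (simp add: cmod_power2 z1_def)
    have z1eq: "poly (map_poly of_real (Qp z0)) z1 = - (of_real \<epsilon> :: complex)"
      using s2 c0 by (simp add: Qp_def map_poly_pCons complex_eq_iff z1_def power2_eq_square algebra_simps)
    have "(cmod z1)^2 > (cmod z0)^2" using c0 c1 s2 eps by simp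
    hence "cmod z1 > cmod z0" by (rule power_less_imp_less_base) auto
    hence "z1 \<notin> S" using z0 by force
    have gt: "\<phi> z1 > m"
    proof (cases "cmod z1 \<le> R")
      case True
      hence "\<phi> z1 \<noteq> m" using \<open>z1 \<notin> S\<close> by (simp add: S_def)
      thus ?thesis using minall[of z1] by simp
    next
      case False thus ?thesis using coer[of z1] minall[of 0] by simp
    qed
    have key: "\<phi> z1 \<le> m * (1 + (1/2)^n)^2" if n: "n \<ge> 1" for n
    proof -
      have "\<phi> z1 * m ^ (2*n - 1) \<le> (m ^ n + \<epsilon> ^ n)^2"
        using ostrowski_key[of m \<xi> z0 \<epsilon> n z1] minall pz0 eps n z1eq
        unfolding \<phi>_def E_def by blast
      also have "\<dots> = m ^ (2*n) * (1 + (1/2)^n)^2"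
      proof -
        have "\<epsilon> ^ n = m ^ n * (1/2)^n" by (simp add: \<epsilon>_def power_mult_distrib[symmetric])
        hence "m ^ n + \<epsilon> ^ n = m ^ n * (1 + (1/2)^n)" by (simp add: algebra_simps)
        hence "(m ^ n + \<epsilon> ^ n)^2 = (m ^ n)^2 * (1 + (1/2)^n)^2" by (simp add: power_mult_distrib)
        thus ?thesis by (simp add: power_mult[symmetric] mult.commute)
      qed
      also have "m ^ (2*n) = m * m ^ (2*n-1)"
      proof -
        have e: "2*n = Suc (2*n-1)" using n by simp
        show ?thesis by (metis e power_Suc)
      qed
      finally have "\<phi> z1 * m ^ (2*n - 1) \<le> (m * (1 + (1/2)^n)^2) * m ^ (2*n-1)" by (simp add: ac_simps)
      moreover have "m ^ (2*n-1) > 0" using mpos by simp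
      ultimately show ?thesis by simp
    qed
    define \<delta> where "\<delta> = min 1 ((\<phi> z1 / m - 1) / 3)"
    have dpos: "\<delta> > 0" using gt mpos by (simp add: \<delta>_def field_simps)
    obtain n where n: "(1/2::real)^n < \<delta>" using real_arch_pow_inv[OF dpos, of "1/2"] by auto
    have n1: "n \<ge> 1" using n by (cases n) (auto simp: \<delta>_def)
    define t where "t = (1/2::real)^n"
    have t0: "t \<ge> 0" "t \<le> 1" using n by (auto simp: t_def \<delta>_def)
    have "t * t \<le> 1 * t" using t0 by (intro mult_right_mono) auto
    hence "(1 + t)^2 \<le> 1 + 3 * t" by (simp add: power2_eq_square algebra_simps)
    hence "m * (1 + t)^2 \<le> m * (1 + 3 * t)" using mpos by (intro mult_left_mono) auto
    hence "\<phi> z1 \<le> m * (1 + 3 * t)" using key[OF n1] by (simp add: t_def)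
    also have "\<dots> < m * (1 + 3 * ((\<phi> z1 / m - 1) / 3))"
      using n mpos by (intro mult_strict_left_mono) (auto simp: t_def \<delta>_def)
    also have "\<dots> = \<phi> z1" using mpos by (simp add: field_simps)
    finally show False by simp
  qed
  hence "E (Qp z0) = 0" using pz0 by (simp add: \<phi>_def)
  hence "\<xi>^2 + of_real (- 2 * Re z0) * \<xi> + of_real ((cmod z0)^2) = 0" by (simp add: Eq)
  thus ?thesis by blast
qed

lemma complete_square:
  fixes y :: "'a::real_normed_field"
  assumes "y^2 + of_real b * y + of_real c = 0"
  shows "(y + of_real (b/2))^2 = of_real (b^2/4 - c)"
proof -
  have "(y + of_real (b/2))^2 = y^2 + of_real b * y + of_real ((b/2)^2)"
    by (simp add: power2_eq_square algebra_simps flip: of_real_mult)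
  also have "\<dots> = of_real (b^2/4 - c)" using assms
  proof -
    have "y^2 + of_real b * y = - of_real c" using assms by (simp add: eq_neg_iff_add_eq_0)
    thus ?thesis by (simp add: of_real_diff power_divide)
  qed
  finally show ?thesis .
qed

lemma sq_eq_cases:
  fixes u v :: "'a::field"
  assumes "u^2 = v^2" shows "u = v \<or> u = - v"
proof -
  have "(u - v) * (u + v) = 0" using assms by (simp add: power2_eq_square algebra_simps)
  thus ?thesis by (auto simp: eq_neg_iff_add_eq_0)
qed

lemma real_or_imag:
  fixes y :: "'a::real_normed_field"
  shows "(\<exists>r. y = of_real r) \<or> (\<exists>r s j. y = of_real r + of_real s * j \<and> j^2 = -1)"
proof -
  obtain b c :: real where q: "y^2 + of_real b * y + of_real c = 0"
    using normed_field_quadratic by blast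
  define D where "D = b^2/4 - c"
  have sq: "(y + of_real (b/2))^2 = of_real D" using complete_square[OF q] by (simp add: D_def)
  show ?thesis
  proof (cases "D \<ge> 0")
    case True
    have "(y + of_real (b/2))^2 = (of_real (sqrt D))^2"
      using sq True by (simp flip: of_real_power)
    hence "y + of_real (b/2) = of_real (sqrt D) \<or> y + of_real (b/2) = - of_real (sqrt D)"
      by (rule sq_eq_cases)
    hence "y = of_real (sqrt D - b/2) \<or> y = of_real (- sqrt D - b/2)"
      by (auto simp: algebra_simps)
    thus ?thesis by blast
  next
    case False
    define q where "q = sqrt (- D)"
    have q0: "q > 0" using False by (simp add: q_def)
    have qq: "q^2 = - D" using False by (simp add: q_def)
    define j where "j = (y + of_real (b/2)) / of_real q"
    have "j^2 = of_real D / of_real (q^2)" unfolding j_def power_divide sq of_real_power by (rule refl)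
    also have "\<dots> = -1" using qq q0 False by (simp add: field_simps)
    finally have j2: "j^2 = -1" .
    have "y = of_real (- b/2) + of_real q * j" using q0 by (simp add: j_def field_simps)
    thus ?thesis using j2 by blast
  qed
qed

lemma normed_field_span2:
  obtains c :: "'a::real_normed_field" where "\<And>x. \<exists>r s::real. x = of_real r + of_real s * c"
proof (cases "\<forall>x::'a. \<exists>r. x = of_real r")
  case True
  thus ?thesis using that[of 0] by auto
next
  case False
  then obtain x0 :: 'a where x0: "\<forall>r. x0 \<noteq> of_real r" by auto
  then obtain r0 s0 i where i: "x0 = of_real r0 + of_real s0 * i" "i^2 = -1"
    using real_or_imag[of x0] by auto
  have "\<exists>r s::real. x = of_real r + of_real s * i" for x
  proof -
    from real_or_imag[of x] show ?thesis
    proof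
      assume "\<exists>r. x = of_real r" then obtain r where "x = of_real r" by blast
      hence "x = of_real r + of_real 0 * i" by simp
      thus ?thesis by blast
    next
      assume "\<exists>r s j. x = of_real r + of_real s * j \<and> j^2 = -1"
      then obtain r s j where rj: "x = of_real r + of_real s * j" "j^2 = -1" by blast
      have "j^2 = i^2" using rj i by simp
      hence "j = i \<or> j = - i" by (rule sq_eq_cases)
      thus ?thesis
      proof
        assume "j = i" thus ?thesis using rj by blast
      next
        assume "j = - i" hence "x = of_real r + of_real (- s) * i" using rj by simp
        thus ?thesis by blast
      qed
    qed
  qed
  thus ?thesis by (rule that)
qed

lemma normed_field_separable:
  obtains Q :: "'a::real_normed_field set"
  where "countable Q" "\<And>x e. e > 0 \<Longrightarrow> \<exists>q\<in>Q. norm (x - q) < e"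
proof -
  obtain c :: 'a where c: "\<And>x. \<exists>r s::real. x = of_real r + of_real s * c"
    using normed_field_span2 by blast
  define Q where "Q = (\<lambda>(a,b). of_real a + of_real b * c) ` (\<rat> \<times> \<rat>)"
  have "countable Q" unfolding Q_def by (intro countable_image countable_SIGMA countable_rat)
  moreover have "\<exists>q\<in>Q. norm (x - q) < e" if e: "e > 0" for x e
  proof -
    obtain r s where x: "x = of_real r + of_real s * c" using c by blast
    define C where "C = norm c + 1"
    have C: "C > 0" by (simp add: C_def add_nonneg_pos)
    obtain a where a: "a \<in> \<rat>" "r - e/2 < a" "a < r + e/2"
      using Rats_dense_in_real[of "r - e/2" "r + e/2"] e by auto
    obtain b where b: "b \<in> \<rat>" "s - e/(2*C) < b" "b < s + e/(2*C)"
      using Rats_dense_in_real[of "s - e/(2*C)" "s + e/(2*C)"] e C by auto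
    have eq: "x - (of_real a + of_real b * c) = of_real (r - a) + of_real (s - b) * c"
      by (simp add: x algebra_simps)
    have "norm (of_real (r - a) + of_real (s - b) * c) \<le> norm (of_real (r - a) :: 'a) + norm (of_real (s - b) * c)"
      by (rule norm_triangle_ineq)
    also have "\<dots> = \<bar>r - a\<bar> + \<bar>s - b\<bar> * norm c" by (simp only: norm_of_real norm_mult)
    finally have "norm (x - (of_real a + of_real b * c)) \<le> \<bar>r - a\<bar> + \<bar>s - b\<bar> * norm c"
      unfolding eq .
    also have "\<bar>s - b\<bar> * norm c \<le> \<bar>s - b\<bar> * C" by (intro mult_left_mono) (auto simp: C_def)
    also have "\<bar>s - b\<bar> * C < e/(2*C) * C" using b C by (intro mult_strict_right_mono) auto
    also have "e/(2*C) * C = e/2" using C by simp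
    finally have "norm (x - (of_real a + of_real b * c)) < e" using a by linarith
    moreover have "of_real a + of_real b * c \<in> Q" using a b by (auto simp: Q_def)
    ultimately show ?thesis by blast
  qed
  ultimately show ?thesis using that by blast
qed


lemma powr_le_self: "0 \<le> (t::real) \<Longrightarrow> t \<le> 1 \<Longrightarrow> 1 \<le> p \<Longrightarrow> t powr p \<le> t"
  using powr_mono'[of 1 p t] by (simp add: powr_one)

lemma powr_convex_comb:
  fixes u v t p :: real
  assumes p: "1 \<le> p" and t: "0 \<le> t" "t \<le> 1" and uv: "0 \<le> u" "0 \<le> v"
  shows "((1-t)*u + t * v) powr p \<le> (1-t) * u powr p + t * v powr p"
proof (cases "u = 0 \<or> v = 0")
  case False
  hence "u > 0" "v > 0" using uv by auto
  thus ?thesis using convex_onD[OF powr_convex[OF p], of t u v] t by simp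
next
  case True
  then show ?thesis
  proof
    assume u: "u = 0"
    have "(t * v) powr p = t powr p * v powr p" by (simp add: powr_mult)
    also have "\<dots> \<le> t * v powr p" by (intro mult_right_mono powr_le_self) (use t p in auto)
    finally show ?thesis using u by simp
  next
    assume v: "v = 0"
    have "((1-t)*u) powr p = (1-t) powr p * u powr p" by (simp add: powr_mult)
    also have "\<dots> \<le> (1-t) * u powr p" by (intro mult_right_mono powr_le_self) (use t p in auto)
    finally show ?thesis using v by simp
  qed
qed

lemma sum_powr_le:
  fixes a :: "'b \<Rightarrow> real"
  assumes p: "1 \<le> p" and F: "finite F" and a: "\<And>j. j \<in> F \<Longrightarrow> a j \<ge> 0"
  shows "(\<Sum>j\<in>F. a j powr p) \<le> (\<Sum>j\<in>F. a j) powr p"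
proof -
  define S where "S = (\<Sum>j\<in>F. a j)"
  have S0: "S \<ge> 0" unfolding S_def by (intro sum_nonneg a)
  show ?thesis
  proof (cases "S = 0")
    case True
    hence "\<forall>j\<in>F. a j = 0" using sum_nonneg_eq_0_iff[OF F] a unfolding S_def by blast
    thus ?thesis using p by simp
  next
    case False
    hence Sp: "S > 0" using S0 by simp
    have aS: "a j \<le> S" if "j \<in> F" for j
      unfolding S_def using that a F by (intro member_le_sum) auto
    have "(\<Sum>j\<in>F. a j powr p) = (\<Sum>j\<in>F. S powr p * (a j / S) powr p)"
      using Sp a by (intro sum.cong) (auto simp: powr_divide)
    also have "\<dots> \<le> (\<Sum>j\<in>F. S powr p * (a j / S))"
      using Sp a aS p by (intro sum_mono mult_left_mono powr_le_self) auto
    also have "\<dots> = S powr p * (\<Sum>j\<in>F. a j) / S"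
      by (simp add: sum_distrib_left sum_divide_distrib)
    also have "\<dots> = S powr p" using Sp by (simp add: S_def)
    finally show ?thesis by (simp add: S_def)
  qed
qed

context
  fixes p :: real
  assumes p1: "1 \<le> p"
begin

lemma p_pos: "p > 0" using p1 by simp

abbreviation psum :: "(int \<Rightarrow> 'a::real_normed_vector) \<Rightarrow> real" where
  "psum x \<equiv> (\<Sum>\<^sub>\<infinity>j. norm (x j) powr p)"

lemma psum_nonneg: "psum x \<ge> 0"
  by (rule infsum_nonneg) simp

lemma lp_norm_nonneg: "lp_norm p x \<ge> 0"
  by (simp add: lp_norm_def)

lemma lp_norm_pow: "lp_norm p x powr p = psum x"
  unfolding lp_norm_def using p_pos by (simp add: powr_powr psum_nonneg powr_one)

lemma lp_norm_le: assumes "c \<ge> 0" "psum x \<le> c powr p" shows "lp_norm p x \<le> c"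
proof -
  have "lp_norm p x \<le> (c powr p) powr (1/p)"
    unfolding lp_norm_def using assms p_pos by (intro powr_mono2) (auto simp: psum_nonneg)
  also have "\<dots> = c" using p_pos assms by (simp add: powr_powr powr_one)
  finally show ?thesis .
qed

lemma lp_norm_mono: assumes "psum x \<le> psum y" shows "lp_norm p x \<le> lp_norm p y"
  unfolding lp_norm_def using assms p_pos by (intro powr_mono2) (auto simp: psum_nonneg)

lemma lp_coord:
  assumes "x \<in> lp p" shows "norm (x j) \<le> lp_norm p x"
proof -
  have s: "(\<lambda>j. norm (x j) powr p) summable_on UNIV" using assms by (simp add: lp_def)
  have "norm (x j) powr p = (\<Sum>\<^sub>\<infinity>i\<in>{j}. norm (x i) powr p)" by simp
  also have "\<dots> \<le> psum x" by (rule infsum_mono_neutral) (use s in auto)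
  finally have "norm (x j) powr p \<le> psum x" .
  hence "(norm (x j) powr p) powr (1/p) \<le> lp_norm p x"
    unfolding lp_norm_def using p_pos by (intro powr_mono2) auto
  thus ?thesis using p_pos by (simp add: powr_powr powr_one)
qed

lemma lp_zero:
  assumes "x \<in> lp p" "lp_norm p x = 0" shows "x = (\<lambda>j. 0)"
  using lp_coord[OF assms(1)] assms(2) by (auto intro!: ext)

lemma lp_finite:
  fixes x :: "int \<Rightarrow> 'a::real_normed_vector"
  assumes F: "finite F" and x: "\<And>j. j \<notin> F \<Longrightarrow> x j = 0"
  shows "x \<in> lp p" "psum x = (\<Sum>j\<in>F. norm (x j) powr p)" "lp_norm p x \<le> (\<Sum>j\<in>F. norm (x j))"
proof -
  have "(\<lambda>j. norm (x j) powr p) summable_on F" using F by simp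
  hence "(\<lambda>j. norm (x j) powr p) summable_on UNIV"
  proof -
    have "(\<lambda>j. norm (x j) powr p) summable_on UNIV \<longleftrightarrow> (\<lambda>j. norm (x j) powr p) summable_on F"
      by (rule summable_on_cong_neutral) (use x in auto)
    thus ?thesis using \<open>(\<lambda>j. norm (x j) powr p) summable_on F\<close> by simp
  qed
  thus "x \<in> lp p" by (simp add: lp_def)
  show ps: "psum x = (\<Sum>j\<in>F. norm (x j) powr p)"
  proof -
    have "psum x = (\<Sum>\<^sub>\<infinity>j\<in>F. norm (x j) powr p)" by (rule infsum_cong_neutral) (use x in auto)
    thus ?thesis using F by simp
  qed
  show "lp_norm p x \<le> (\<Sum>j\<in>F. norm (x j))"
    by (rule lp_norm_le) (use ps sum_powr_le[OF p1 F, of "\<lambda>j. norm (x j)"] in \<open>auto intro: sum_nonneg\<close>)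
qed

lemma lp_zero_fun [simp]: "(\<lambda>j. 0) \<in> lp p" "lp_norm p (\<lambda>j. 0) = 0"
  using p_pos by (auto simp: lp_def lp_norm_def)

lemma minkowski:
  fixes x y :: "int \<Rightarrow> 'a::real_normed_vector"
  assumes x: "x \<in> lp p" and y: "y \<in> lp p"
  shows "(\<lambda>j. x j + y j) \<in> lp p" "lp_norm p (\<lambda>j. x j + y j) \<le> lp_norm p x + lp_norm p y"
proof -
  define a where "a = lp_norm p x"
  define b where "b = lp_norm p y"
  have a0: "a \<ge> 0" "b \<ge> 0" by (simp_all add: a_def b_def lp_norm_nonneg)
  have "(\<lambda>j. x j + y j) \<in> lp p \<and> lp_norm p (\<lambda>j. x j + y j) \<le> a + b"
  proof (cases "a = 0 \<or> b = 0")
    case True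
    then show ?thesis
    proof
      assume "a = 0"
      hence "x = (\<lambda>j. 0)" using lp_zero[OF x] by (simp add: a_def)
      thus ?thesis using y \<open>a = 0\<close> by (simp add: b_def)
    next
      assume "b = 0"
      hence "y = (\<lambda>j. 0)" using lp_zero[OF y] by (simp add: b_def)
      thus ?thesis using x \<open>b = 0\<close> by (simp add: a_def)
    qed
  next
    case False
    hence ap: "a > 0" and bp: "b > 0" using a0 by auto
    define t where "t = b / (a + b)"
    have t: "0 \<le> t" "t \<le> 1" using ap bp by (auto simp: t_def)
    have t1: "1 - t = a / (a + b)" using ap bp by (simp add: t_def field_simps)
    have sx: "(\<lambda>j. norm (x j) powr p) summable_on UNIV" using x by (simp add: lp_def)
    have sy: "(\<lambda>j. norm (y j) powr p) summable_on UNIV" using y by (simp add: lp_def)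
    define cx where "cx = (a+b) powr p * (1-t) / a powr p"
    define cy where "cy = (a+b) powr p * t / b powr p"
    define g where "g j = cx * norm (x j) powr p + cy * norm (y j) powr p" for j
    have apn: "a powr p > 0" "b powr p > 0" using ap bp by auto
    have pt: "norm (x j + y j) powr p \<le> g j" for j
    proof -
      have "(a + b) * ((1-t) * (norm (x j) / a) + t * (norm (y j) / b)) = norm (x j) + norm (y j)"
      proof -
        have e1: "(a+b)*(a/(a+b)) = a" "(a+b)*(b/(a+b)) = b" using ap bp by auto
        have "(a + b) * ((1-t) * (norm (x j) / a) + t * (norm (y j) / b))
            = ((a+b)*(a/(a+b))) * (norm (x j) / a) + ((a+b)*(b/(a+b))) * (norm (y j) / b)"
          unfolding t1 unfolding t_def by (simp only: distrib_left mult.assoc)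
        also have "\<dots> = norm (x j) + norm (y j)" unfolding e1 using ap bp by simp
        finally show ?thesis .
      qed
      hence "norm (x j + y j) \<le> (a + b) * ((1-t) * (norm (x j) / a) + t * (norm (y j) / b))"
        using norm_triangle_ineq[of "x j" "y j"] by simp
      hence "norm (x j + y j) powr p \<le> ((a + b) * ((1-t) * (norm (x j) / a) + t * (norm (y j) / b))) powr p"
        using p_pos by (intro powr_mono2) auto
      also have "\<dots> = (a+b) powr p * ((1-t) * (norm (x j) / a) + t * (norm (y j) / b)) powr p"
        by (simp add: powr_mult)
      also have "\<dots> \<le> (a+b) powr p * ((1-t) * (norm (x j) / a) powr p + t * (norm (y j) / b) powr p)"
        using ap bp t by (intro mult_left_mono powr_convex_comb p1) auto
      also have "\<dots> = g j" using apn by (simp add: g_def cx_def cy_def powr_divide field_simps)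
      finally show ?thesis .
    qed
    have sg: "g summable_on UNIV" unfolding g_def
      by (intro summable_on_add summable_on_cmult_right sx sy)
    have s: "(\<lambda>j. norm (x j + y j) powr p) summable_on UNIV"
      by (rule summable_on_comparison_test[OF sg]) (use pt in auto)
    have "psum (\<lambda>j. x j + y j) \<le> (\<Sum>\<^sub>\<infinity>j. g j)"
      by (rule infsum_mono[OF s sg]) (use pt in auto)
    also have "(\<Sum>\<^sub>\<infinity>j. g j) = cx * psum x + cy * psum y"
      unfolding g_def
      by (simp add: infsum_cmult_right infsum_add summable_on_cmult_right sx sy)
    also have "\<dots> = (a+b) powr p * ((1-t) + t)"
      using apn by (simp add: a_def b_def lp_norm_pow[symmetric] cx_def cy_def field_simps)
    also have "\<dots> = (a+b) powr p" by simp
    finally have "lp_norm p (\<lambda>j. x j + y j) \<le> a + b" using a0 by (intro lp_norm_le) auto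
    thus ?thesis using s by (simp add: lp_def)
  qed
  thus "(\<lambda>j. x j + y j) \<in> lp p" "lp_norm p (\<lambda>j. x j + y j) \<le> lp_norm p x + lp_norm p y"
    by (auto simp: a_def b_def)
qed


lemma lp_scale:
  fixes x :: "int \<Rightarrow> 'a::real_normed_field"
  assumes x: "x \<in> lp p"
  shows "(\<lambda>j. c * x j) \<in> lp p" "lp_norm p (\<lambda>j. c * x j) = norm c * lp_norm p x"
proof -
  have eq: "(\<lambda>j. norm (c * x j) powr p) = (\<lambda>j. norm c powr p * norm (x j) powr p)"
    by (simp add: norm_mult powr_mult)
  have sx: "(\<lambda>j. norm (x j) powr p) summable_on UNIV" using x by (simp add: lp_def)
  show "(\<lambda>j. c * x j) \<in> lp p" unfolding lp_def mem_Collect_eq eq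
    using summable_on_cmult_right[OF sx] by simp
  have "psum (\<lambda>j. c * x j) = norm c powr p * psum x" unfolding eq
    by (rule infsum_cmult_right) (use sx in auto)
  thus "lp_norm p (\<lambda>j. c * x j) = norm c * lp_norm p x"
    unfolding lp_norm_def using p_pos by (simp add: powr_mult powr_powr powr_one)
qed

lemma lp_minus:
  fixes x :: "int \<Rightarrow> 'a::real_normed_vector"
  shows "(\<lambda>j. - x j) \<in> lp p \<longleftrightarrow> x \<in> lp p" "lp_norm p (\<lambda>j. - x j) = lp_norm p x"
  by (simp_all add: lp_def lp_norm_def)

lemma lp_diff:
  fixes x y :: "int \<Rightarrow> 'a::real_normed_vector"
  assumes x: "x \<in> lp p" and y: "y \<in> lp p"
  shows "(\<lambda>j. x j - y j) \<in> lp p" "lp_norm p (\<lambda>j. x j - y j) \<le> lp_norm p x + lp_norm p y"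
proof -
  have y': "(\<lambda>j. - y j) \<in> lp p" using y lp_minus by blast
  have e: "(\<lambda>j. x j - y j) = (\<lambda>j. x j + - y j)" by simp
  show "(\<lambda>j. x j - y j) \<in> lp p" unfolding e by (rule minkowski(1)[OF x y'])
  show "lp_norm p (\<lambda>j. x j - y j) \<le> lp_norm p x + lp_norm p y"
    unfolding e using minkowski(2)[OF x y'] lp_minus(2)[of y] by simp
qed

lemma lp_norm_commute:
  fixes x y :: "int \<Rightarrow> 'a::real_normed_vector"
  shows "lp_norm p (\<lambda>j. x j - y j) = lp_norm p (\<lambda>j. y j - x j)"
  by (simp add: lp_norm_def norm_minus_commute)

lemma lp_triangle:
  fixes x y z :: "int \<Rightarrow> 'a::real_normed_vector"
  assumes x: "x \<in> lp p" and y: "y \<in> lp p" and z: "z \<in> lp p"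
  shows "lp_norm p (\<lambda>j. x j - z j) \<le> lp_norm p (\<lambda>j. x j - y j) + lp_norm p (\<lambda>j. y j - z j)"
proof -
  have e: "(\<lambda>j. x j - z j) = (\<lambda>j. (x j - y j) + (y j - z j))" by simp
  show ?thesis unfolding e by (rule minkowski(2)) (auto intro: lp_diff x y z)
qed

lemma lp_complete:
  fixes \<sigma> :: "nat \<Rightarrow> int \<Rightarrow> 'a::banach"
  assumes \<sigma>: "\<And>n. \<sigma> n \<in> lp p"
    and C: "\<And>\<epsilon>. \<epsilon> > 0 \<Longrightarrow> \<exists>N. \<forall>n n'. N \<le> n \<longrightarrow> N \<le> n' \<longrightarrow> lp_norm p (\<lambda>j. \<sigma> n j - \<sigma> n' j) < \<epsilon>"
  shows "\<exists>x \<in> lp p. \<forall>\<epsilon>>0. \<exists>N. \<forall>n\<ge>N. lp_norm p (\<lambda>j. \<sigma> n j - x j) < \<epsilon>"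
proof -
  have cj: "Cauchy (\<lambda>n. \<sigma> n j)" for j
  proof (rule CauchyI)
    fix e :: real assume "e > 0"
    then obtain N where N: "\<forall>n n'. N \<le> n \<longrightarrow> N \<le> n' \<longrightarrow> lp_norm p (\<lambda>j. \<sigma> n j - \<sigma> n' j) < e"
      using C by blast
    have "norm (\<sigma> m j - \<sigma> n j) < e" if "m \<ge> N" "n \<ge> N" for m n
      using lp_coord[OF lp_diff(1)[OF \<sigma>[of m] \<sigma>[of n]], of j] N that by fastforce
    thus "\<exists>M. \<forall>m\<ge>M. \<forall>n\<ge>M. norm (\<sigma> m j - \<sigma> n j) < e" by blast
  qed
  define x where "x j = lim (\<lambda>n. \<sigma> n j)" for j
  have lim: "(\<lambda>n. \<sigma> n j) \<longlonglongrightarrow> x j" for j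
    using cj[of j] unfolding x_def by (simp add: Cauchy_convergent_iff convergent_LIMSEQ_iff)
  have main: "\<exists>N. \<forall>n\<ge>N. (\<lambda>j. \<sigma> n j - x j) \<in> lp p \<and> lp_norm p (\<lambda>j. \<sigma> n j - x j) < \<epsilon>"
    if e: "\<epsilon> > 0" for \<epsilon>
  proof -
    obtain N where N: "\<forall>n n'. N \<le> n \<longrightarrow> N \<le> n' \<longrightarrow> lp_norm p (\<lambda>j. \<sigma> n j - \<sigma> n' j) < \<epsilon>/2"
      using C[of "\<epsilon>/2"] e by auto
    have "(\<lambda>j. \<sigma> n j - x j) \<in> lp p \<and> lp_norm p (\<lambda>j. \<sigma> n j - x j) < \<epsilon>" if n: "n \<ge> N" for n
    proof -
      have fin: "(\<Sum>j\<in>F. norm (\<sigma> n j - x j) powr p) \<le> (\<epsilon>/2) powr p" if F: "finite F" for F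
      proof (rule LIMSEQ_le_const2)
        show "(\<lambda>n'. \<Sum>j\<in>F. norm (\<sigma> n j - \<sigma> n' j) powr p) \<longlonglongrightarrow> (\<Sum>j\<in>F. norm (\<sigma> n j - x j) powr p)"
          using p_pos by (intro tendsto_sum tendsto_powr' tendsto_norm tendsto_diff tendsto_const lim) auto
        show "\<exists>N'. \<forall>n'\<ge>N'. (\<Sum>j\<in>F. norm (\<sigma> n j - \<sigma> n' j) powr p) \<le> (\<epsilon>/2) powr p"
        proof (intro exI allI impI)
          fix n' assume n': "n' \<ge> N"
          have d: "(\<lambda>j. \<sigma> n j - \<sigma> n' j) \<in> lp p" by (rule lp_diff(1)[OF \<sigma> \<sigma>])
          hence sd: "(\<lambda>j. norm (\<sigma> n j - \<sigma> n' j) powr p) summable_on UNIV" by (simp add: lp_def)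
          have "(\<Sum>j\<in>F. norm (\<sigma> n j - \<sigma> n' j) powr p) = (\<Sum>\<^sub>\<infinity>j\<in>F. norm (\<sigma> n j - \<sigma> n' j) powr p)"
            using F by simp
          also have "\<dots> \<le> psum (\<lambda>j. \<sigma> n j - \<sigma> n' j)"
            by (rule infsum_mono_neutral) (use F sd in auto)
          also have "\<dots> = lp_norm p (\<lambda>j. \<sigma> n j - \<sigma> n' j) powr p" by (simp add: lp_norm_pow)
          also have "\<dots> \<le> (\<epsilon>/2) powr p"
            using N n n' p_pos by (intro powr_mono2) (auto simp: lp_norm_nonneg less_imp_le)
          finally show "(\<Sum>j\<in>F. norm (\<sigma> n j - \<sigma> n' j) powr p) \<le> (\<epsilon>/2) powr p" .
        qed
      qed
      have s: "(\<lambda>j. norm (\<sigma> n j - x j) powr p) summable_on UNIV"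
        by (rule nonneg_bdd_above_summable_on) (auto intro!: bdd_aboveI2 fin)
      have "psum (\<lambda>j. \<sigma> n j - x j) \<le> (\<epsilon>/2) powr p"
        by (rule infsum_le_finite_sums[OF s]) (use fin in auto)
      hence "lp_norm p (\<lambda>j. \<sigma> n j - x j) \<le> \<epsilon>/2" using e by (intro lp_norm_le) auto
      thus ?thesis using s e by (simp add: lp_def)
    qed
    thus ?thesis by blast
  qed
  obtain N where N: "\<forall>n\<ge>N. (\<lambda>j. \<sigma> n j - x j) \<in> lp p \<and> lp_norm p (\<lambda>j. \<sigma> n j - x j) < 1"
    using main[of 1] by auto
  have e: "x = (\<lambda>j. \<sigma> N j - (\<sigma> N j - x j))" by simp
  have "x \<in> lp p" by (subst e, rule lp_diff(1)) (use \<sigma> N in auto)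
  thus ?thesis using main by blast
qed


lemma finite_int_bound:
  assumes "finite (F :: int set)" shows "\<exists>M::nat. \<forall>j\<in>F. \<bar>j\<bar> \<le> int M"
proof -
  have "nat \<bar>j\<bar> \<le> (\<Sum>i\<in>F. nat \<bar>i\<bar>)" if "j \<in> F" for j
    by (rule member_le_sum) (use assms that in auto)
  hence "\<bar>j\<bar> \<le> int (\<Sum>i\<in>F. nat \<bar>i\<bar>)" if "j \<in> F" for j
    using that by (metis int_nat_eq abs_ge_zero of_nat_le_iff max_def)
  thus ?thesis by blast
qed

lemma lp_tail:
  fixes y :: "int \<Rightarrow> 'a::real_normed_vector"
  assumes y: "y \<in> lp p" and e: "\<epsilon> > 0"
  shows "\<exists>M::nat. lp_norm p (\<lambda>j. y j - (if \<bar>j\<bar> \<le> int M then y j else 0)) \<le> \<epsilon>"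
proof -
  define f where "f j = norm (y j) powr p" for j
  have sf: "f summable_on UNIV" using y by (simp add: lp_def f_def[abs_def])
  have d: "\<epsilon> powr p > 0" using e by simp
  obtain F where F: "finite F" "dist (sum f F) (infsum f UNIV) \<le> \<epsilon> powr p"
    using infsum_finite_approximation[OF sf d] by auto
  obtain M :: nat where M: "\<forall>j\<in>F. \<bar>j\<bar> \<le> int M" using finite_int_bound[OF F(1)] by blast
  define g where "g j = (if j \<in> F then 0 else f j)" for j
  define h where "h j = (if j \<in> F then f j else 0)" for j
  have f0: "f j \<ge> 0" for j by (simp add: f_def)
  have sg: "g summable_on UNIV" by (rule summable_on_comparison_test[OF sf]) (auto simp: g_def f0)
  have sh: "h summable_on UNIV"
  proof -
    have "h summable_on UNIV \<longleftrightarrow> h summable_on F" by (rule summable_on_cong_neutral) (auto simp: h_def)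
    thus ?thesis using F(1) by simp
  qed
  have ih: "infsum h UNIV = sum f F"
  proof -
    have "infsum h UNIV = infsum h F" by (rule infsum_cong_neutral) (auto simp: h_def)
    thus ?thesis using F(1) by (simp add: h_def)
  qed
  have "infsum f UNIV = infsum (\<lambda>j. g j + h j) UNIV" by (rule infsum_cong) (simp add: g_def h_def)
  also have "\<dots> = infsum g UNIV + sum f F" using infsum_add[OF sg sh] ih by simp
  finally have "infsum g UNIV \<le> \<epsilon> powr p" using F(2) by (simp add: dist_real_def)
  moreover have "psum (\<lambda>j. y j - (if \<bar>j\<bar> \<le> int M then y j else 0)) \<le> infsum g UNIV"
  proof (rule infsum_mono)
    show "(\<lambda>j. norm (y j - (if \<bar>j\<bar> \<le> int M then y j else 0)) powr p) summable_on UNIV"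
      by (rule summable_on_comparison_test[OF sg]) (use M in \<open>auto simp: g_def f_def\<close>)
  qed (use sg M in \<open>auto simp: g_def f_def\<close>)
  ultimately show ?thesis using e by (intro exI[of _ M] lp_norm_le) auto
qed

lemma lp_separable:
  obtains D :: "(int \<Rightarrow> 'a::real_normed_field) set"
  where "countable D" "D \<subseteq> lp p" "\<And>d. d \<in> D \<Longrightarrow> \<exists>M::nat. \<forall>j. d j \<noteq> 0 \<longrightarrow> \<bar>j\<bar> \<le> int M"
    "\<And>y \<epsilon>. y \<in> lp p \<Longrightarrow> \<epsilon> > 0 \<Longrightarrow> \<exists>d\<in>D. lp_norm p (\<lambda>j. d j - y j) < \<epsilon>"
proof -
  obtain Q :: "'a set" where Q: "countable Q" "\<And>x e. e > 0 \<Longrightarrow> \<exists>q\<in>Q. norm (x - q) < e"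
    using normed_field_separable by blast
  define Q0 where "Q0 = insert 0 Q"
  define ext :: "nat \<Rightarrow> (int \<Rightarrow> 'a) \<Rightarrow> (int \<Rightarrow> 'a)" where
    "ext M f = (\<lambda>j. if \<bar>j\<bar> \<le> int M then f j else 0)" for M f
  define D where "D = (\<Union>M. ext M ` (Pi\<^sub>E {-int M..int M} (\<lambda>_. Q0)))"
  have cD: "countable D" unfolding D_def
    by (intro countable_UN countable_image countable_PiE) (auto simp: Q0_def Q(1))
  have fs: "\<exists>M::nat. \<forall>j. d j \<noteq> 0 \<longrightarrow> \<bar>j\<bar> \<le> int M" if "d \<in> D" for d
    using that by (auto simp: D_def ext_def)
  have DL: "D \<subseteq> lp p"
  proof
    fix d assume "d \<in> D"
    then obtain M :: nat where "\<forall>j. d j \<noteq> 0 \<longrightarrow> \<bar>j\<bar> \<le> int M" using fs by blast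
    thus "d \<in> lp p" by (intro lp_finite(1)[of "{-int M..int M}"]) auto
  qed
  have dense: "\<exists>d\<in>D. lp_norm p (\<lambda>j. d j - y j) < \<epsilon>" if y: "y \<in> lp p" and e: "\<epsilon> > 0" for y \<epsilon>
  proof -
    obtain M :: nat where M: "lp_norm p (\<lambda>j. y j - ext M y j) \<le> \<epsilon>/2"
      using lp_tail[OF y, of "\<epsilon>/2"] e by (auto simp: ext_def)
    define \<eta> where "\<eta> = \<epsilon> / (4 * (real M + 1))"
    have \<eta>: "\<eta> > 0" using e by (simp add: \<eta>_def)
    define q where "q j = (SOME q. q \<in> Q \<and> norm (y j - q) < \<eta>)" for j
    have q: "q j \<in> Q \<and> norm (y j - q j) < \<eta>" for j
      unfolding q_def by (rule someI_ex) (use Q(2)[OF \<eta>] in blast)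
    define d where "d = ext M q"
    have dD: "d \<in> D" unfolding D_def d_def
    proof (rule UN_I[of M], simp, rule image_eqI[of _ _ "restrict q {-int M..int M}"])
      show "ext M q = ext M (restrict q {-int M..int M})" by (auto simp: ext_def restrict_def fun_eq_iff abs_le_iff)
      show "restrict q {- int M..int M} \<in> Pi\<^sub>E {- int M..int M} (\<lambda>_. Q0)"
        using q by (auto simp: Q0_def)
    qed
    have yM: "ext M y \<in> lp p" by (intro lp_finite(1)[of "{-int M..int M}"]) (auto simp: ext_def)
    have "lp_norm p (\<lambda>j. d j - ext M y j) \<le> (\<Sum>j\<in>{-int M..int M}. norm (d j - ext M y j))"
      by (rule lp_finite(3)) (auto simp: d_def ext_def)
    also have "\<dots> \<le> of_nat (card {-int M..int M}) * \<eta>"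
      by (rule sum_bounded_above) (use q in \<open>auto simp: d_def ext_def norm_minus_commute less_imp_le\<close>)
    also have "\<dots> = (2 * real M + 1) * \<eta>" by simp
    also have "\<dots> < \<epsilon> / 2" using e by (simp add: \<eta>_def field_simps)
    finally have a: "lp_norm p (\<lambda>j. d j - ext M y j) < \<epsilon>/2" .
    have "lp_norm p (\<lambda>j. d j - y j) \<le> lp_norm p (\<lambda>j. d j - ext M y j) + lp_norm p (\<lambda>j. ext M y j - y j)"
      by (rule lp_triangle) (use DL dD yM y in auto)
    also have "lp_norm p (\<lambda>j. ext M y j - y j) = lp_norm p (\<lambda>j. y j - ext M y j)" by (rule lp_norm_commute)
    finally have "lp_norm p (\<lambda>j. d j - y j) < \<epsilon>" using a M by linarith
    thus ?thesis using dD by blast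
  qed
  show ?thesis using that cD DL fs dense by blast
qed

end


lemma Wpos_0 [simp]: "Wpos f w j 0 = 1" by (simp add: Wpos_def)

lemma Wpos_Suc: "Wpos f w j (Suc n) = Wpos f w j n * w ((f ^^ Suc n) j)"
  by (simp add: Wpos_def)

lemma Wpos_Suc': "Wpos f w y (Suc n) = w (f y) * Wpos f w (f y) n"
proof -
  have "Wpos f w y (Suc n) = w ((f ^^ 1) y) * (\<Prod>v\<in>{Suc 1..Suc n}. w ((f ^^ v) y))"
    unfolding Wpos_def by (subst prod.atLeast_Suc_atMost) auto
  also have "(\<Prod>v\<in>{Suc 1..Suc n}. w ((f ^^ v) y)) = (\<Prod>v\<in>{1..n}. w ((f ^^ Suc v) y))"
    by (rule prod.shift_bounds_cl_Suc_ivl)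
  also have "\<dots> = Wpos f w (f y) n" unfolding Wpos_def by (simp add: funpow_Suc_right del: funpow.simps)
  finally show ?thesis by simp
qed

lemma Wpos_nz: "(\<And>m. w m \<noteq> 0) \<Longrightarrow> Wpos f w j n \<noteq> 0"
  by (simp add: Wpos_def)

lemma pseudo_shift_pow:
  "(pseudo_shift f w ^^ n) x = (\<lambda>j. Wpos f w j n * x ((f ^^ n) j))"
proof (induction n arbitrary: x)
  case 0 thus ?case by (simp add: fun_eq_iff)
next
  case (Suc n)
  have "(pseudo_shift f w ^^ Suc n) x = (pseudo_shift f w ^^ n) (pseudo_shift f w x)"
    by (simp add: funpow_Suc_right del: funpow.simps)
  also have "\<dots> = (\<lambda>j. Wpos f w j n * pseudo_shift f w x ((f ^^ n) j))"
    by (rule Suc.IH)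
  also have "\<dots> = (\<lambda>j. Wpos f w j (Suc n) * x ((f ^^ Suc n) j))"
    by (simp add: pseudo_shift_def Wpos_Suc mult.assoc)
  finally show ?case .
qed

lemma inv_funpow_cancel:
  assumes "bij f"
  shows "(inv f ^^ n) ((f ^^ n) m) = m" "(f ^^ n) ((inv f ^^ n) m) = m"
proof -
  have i: "inv f (f y) = y" "f (inv f y) = y" for y
    using assms by (auto simp: bij_def inv_f_f surj_f_inv_f)
  have sr: "(g ^^ Suc n) y = (g ^^ n) (g y)" for g :: "'a \<Rightarrow> 'a" and n y
    by (simp add: funpow_Suc_right del: funpow.simps)
  show "(inv f ^^ n) ((f ^^ n) m) = m"
  proof (induction n)
    case (Suc n)
    have a: "(f ^^ Suc n) m = f ((f ^^ n) m)" by simp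
    have "(inv f ^^ Suc n) ((f ^^ Suc n) m) = (inv f ^^ n) (inv f (f ((f ^^ n) m)))"
      unfolding a sr[where g="inv f"] ..
    thus ?case using Suc.IH i by simp
  qed simp
  show "(f ^^ n) ((inv f ^^ n) m) = m"
  proof (induction n)
    case (Suc n)
    have a: "(inv f ^^ Suc n) m = inv f ((inv f ^^ n) m)" by simp
    have "(f ^^ Suc n) ((inv f ^^ Suc n) m) = (f ^^ n) (f (inv f ((inv f ^^ n) m)))"
      unfolding a sr[where g=f] ..
    thus ?case using Suc.IH i by simp
  qed simp
qed

lemma Wneg_Suc: "Wneg f w m (Suc n) = w m * Wneg f w (inv f m) n"
  unfolding Wneg_def by (subst prod.atLeast0_lessThan_Suc_shift) (simp add: funpow_Suc_right del: funpow.simps)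

lemma Wpos_Wneg:
  assumes "bij f"
  shows "Wpos f w ((inv f ^^ n) m) n = Wneg f w m n"
proof (induction n arbitrary: m)
  case 0 thus ?case by (simp add: Wneg_def)
next
  case (Suc n)
  have e: "(inv f ^^ Suc n) m = (inv f ^^ n) (inv f m)" by (simp add: funpow_Suc_right del: funpow.simps)
  have "(f ^^ Suc n) ((inv f ^^ n) (inv f m)) = f (inv f m)" using inv_funpow_cancel(2)[OF assms] by simp
  also have "\<dots> = m" using assms by (simp add: bij_def surj_f_inv_f)
  finally have e2: "(f ^^ Suc n) ((inv f ^^ n) (inv f m)) = m" .
  show ?case unfolding e Wpos_Suc e2 Suc.IH Wneg_Suc by (simp add: mult.commute)
qed

context
  fixes p :: real
  assumes p1: "1 \<le> p"
begin

lemma shift_bound: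
  fixes f :: "int \<Rightarrow> int" and w :: "int \<Rightarrow> 'a::real_normed_field"
  assumes f: "bij f" and B: "\<And>m. norm (w m) \<le> B" and x: "x \<in> lp p"
  shows "pseudo_shift f w x \<in> lp p" "lp_norm p (pseudo_shift f w x) \<le> B * lp_norm p x"
proof -
  have B0: "B \<ge> 0" using B[of 0] norm_ge_zero[of "w 0"] by linarith
  have sx: "(\<lambda>j. norm (x j) powr p) summable_on UNIV" using x by (simp add: lp_def)
  have bf: "bij_betw f UNIV UNIV" using f by (simp add: bij_def bij_betw_def)
  have sxf: "(\<lambda>j. norm (x (f j)) powr p) summable_on UNIV"
    using summable_on_reindex_bij_betw[OF bf, of "\<lambda>j. norm (x j) powr p"] sx by simp
  have ixf: "(\<Sum>\<^sub>\<infinity>j. norm (x (f j)) powr p) = (\<Sum>\<^sub>\<infinity>j. norm (x j) powr p)"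
    using infsum_reindex_bij_betw[OF bf, of "\<lambda>j. norm (x j) powr p"] by simp
  have pt: "norm (pseudo_shift f w x j) powr p \<le> B powr p * norm (x (f j)) powr p" for j
  proof -
    have "norm (pseudo_shift f w x j) powr p = norm (w (f j)) powr p * norm (x (f j)) powr p"
      by (simp add: pseudo_shift_def norm_mult powr_mult)
    also have "\<dots> \<le> B powr p * norm (x (f j)) powr p"
      using p1 B by (intro mult_right_mono powr_mono2) auto
    finally show ?thesis .
  qed
  have s2: "(\<lambda>j. B powr p * norm (x (f j)) powr p) summable_on UNIV"
    by (intro summable_on_cmult_right sxf)
  have s: "(\<lambda>j. norm (pseudo_shift f w x j) powr p) summable_on UNIV"
    by (rule summable_on_comparison_test[OF s2]) (use pt in auto)
  thus "pseudo_shift f w x \<in> lp p" by (simp add: lp_def)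
  have "psum p (pseudo_shift f w x) \<le> (\<Sum>\<^sub>\<infinity>j. B powr p * norm (x (f j)) powr p)"
    by (rule infsum_mono[OF s s2]) (use pt in auto)
  also have "\<dots> = B powr p * psum p x" using ixf by (simp add: infsum_cmult_right sxf)
  also have "\<dots> = (B * lp_norm p x) powr p" using p1 by (simp add: powr_mult lp_norm_pow)
  finally show "lp_norm p (pseudo_shift f w x) \<le> B * lp_norm p x"
    using p1 B0 by (intro lp_norm_le) (auto simp: lp_norm_nonneg)
qed

lemma shift_pow_bound:
  fixes f :: "int \<Rightarrow> int" and w :: "int \<Rightarrow> 'a::real_normed_field"
  assumes f: "bij f" and B: "\<And>m. norm (w m) \<le> B" and x: "x \<in> lp p"
  shows "(pseudo_shift f w ^^ n) x \<in> lp p \<and> lp_norm p ((pseudo_shift f w ^^ n) x) \<le> B ^ n * lp_norm p x"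
proof (induction n)
  case 0 thus ?case using x by simp
next
  case (Suc n)
  have B0: "B \<ge> 0" using B[of 0] norm_ge_zero[of "w 0"] by linarith
  have "lp_norm p ((pseudo_shift f w ^^ Suc n) x) \<le> B * lp_norm p ((pseudo_shift f w ^^ n) x)"
    using shift_bound(2)[where w=w, OF f B] Suc.IH by simp
  also have "\<dots> \<le> B * (B ^ n * lp_norm p x)" using Suc.IH B0 by (intro mult_left_mono) auto
  finally show ?case using shift_bound(1)[where w=w, OF f B] Suc.IH by simp
qed

lemma shift_pow_diff:
  "(\<lambda>j. (pseudo_shift f w ^^ n) x j - (pseudo_shift f w ^^ n) y j) = (pseudo_shift f w ^^ n) (\<lambda>j. x j - y j)"
  by (simp add: pseudo_shift_pow algebra_simps)

lemma shift_pow_add: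
  "(\<lambda>j. (pseudo_shift f w ^^ n) x j + (pseudo_shift f w ^^ n) y j) = (pseudo_shift f w ^^ n) (\<lambda>j. x j + y j)"
  by (simp add: pseudo_shift_pow algebra_simps)

lemma shift_bounded_linear:
  fixes f :: "int \<Rightarrow> int" and w :: "int \<Rightarrow> 'a::real_normed_field"
  assumes f: "bij f" and B: "\<And>m. norm (w m) \<le> B"
  shows "bounded_linear_lp p (pseudo_shift f w)"
  unfolding bounded_linear_lp_def
proof (intro conjI ballI allI)
  show "pseudo_shift f w x \<in> lp p" if "x \<in> lp p" for x using shift_bound(1)[where w=w, OF f B that] .
  show "pseudo_shift f w (\<lambda>j. x j + y j) = (\<lambda>j. pseudo_shift f w x j + pseudo_shift f w y j)" for x y
    by (simp add: pseudo_shift_def algebra_simps)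
  show "pseudo_shift f w (\<lambda>j. c * x j) = (\<lambda>j. c * pseudo_shift f w x j)" for c x
    by (simp add: pseudo_shift_def algebra_simps)
  show "\<exists>C. \<forall>x\<in>lp p. lp_norm p (pseudo_shift f w x) \<le> C * lp_norm p x"
    using shift_bound(2)[where w=w, OF f B] by blast
qed

end


locale dset =
  fixes p :: real and N :: nat
    and f :: "nat \<Rightarrow> int \<Rightarrow> int"
    and w :: "nat \<Rightarrow> int \<Rightarrow> 'a::{real_normed_field, banach}"
    and n :: "nat \<Rightarrow> nat"
  assumes p1: "1 \<le> p"
    and f_bij: "\<forall>i\<in>{1..N}. bij (f i)"
    and w_bdd: "\<forall>i\<in>{1..N}. \<exists>B. \<forall>m. norm (w i m) \<le> B"
    and w_nz: "\<forall>i\<in>{1..N}. \<forall>m. w i m \<noteq> 0"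
    and n_mono: "strict_mono n"
    and n_pos: "\<forall>k. 0 < n k"
    and cond_a: "\<forall>i\<in>{1..N}. \<forall>m.
        filterlim (\<lambda>k. norm (Wpos (f i) (w i) m (n k))) at_top sequentially \<and>
        (\<lambda>k. norm (Wneg (f i) (w i) m (n k))) \<longlonglongrightarrow> 0"
    and cond_b: "\<forall>\<epsilon>>0. \<forall>(K::nat) (M::nat) (a::nat \<Rightarrow> int \<Rightarrow> 'a).
        (\<forall>i\<in>{1..N}. \<forall>j\<in>{-int M..int M}. a i j \<noteq> 0) \<longrightarrow>
        (\<exists>k\<ge>K. \<forall>i\<in>{1..N}. \<forall>l\<in>{1..N}. i \<noteq> l \<longrightarrow>
           (\<forall>j \<in> (f l ^^ n k) ` {-int M..int M} \<inter> (f i ^^ n k) ` (UNIV - {-int M..int M}).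
              norm (Wpos (f i) (w i) ((inv (f i) ^^ n k) j) (n k)
                    / Wpos (f l) (w l) ((inv (f l) ^^ n k) j) (n k)) < \<epsilon>) \<and>
           (\<forall>j \<in> (f l ^^ n k) ` {-int M..int M} \<inter> (f i ^^ n k) ` {-int M..int M}.
              norm (Wpos (f i) (w i) ((inv (f i) ^^ n k) j) (n k)
                    / Wpos (f l) (w l) ((inv (f l) ^^ n k) j) (n k)
                    - a i ((inv (f i) ^^ n k) j) / a l ((inv (f l) ^^ n k) j)) < \<epsilon>))"
begin

abbreviation T :: "nat \<Rightarrow> (int \<Rightarrow> 'a) \<Rightarrow> (int \<Rightarrow> 'a)" where
  "T i \<equiv> pseudo_shift (f i) (w i)"

abbreviation P :: "nat \<Rightarrow> nat \<Rightarrow> int \<Rightarrow> int" where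
  "P i k j \<equiv> (inv (f i) ^^ n k) j"

definition X0 :: "(int \<Rightarrow> 'a) set" where
  "X0 = {x. \<exists>M::nat. \<forall>j. x j \<noteq> 0 \<longrightarrow> \<bar>j\<bar> \<le> int M}"

definition Sk :: "nat \<Rightarrow> (nat \<Rightarrow> int \<Rightarrow> 'a) \<Rightarrow> (int \<Rightarrow> 'a)" where
  "Sk k xs = (\<lambda>j. if \<exists>i\<in>{1..N}. xs i (P i k j) \<noteq> 0
      then (let i = (LEAST i. i \<in> {1..N} \<and> xs i (P i k j) \<noteq> 0)
            in xs i (P i k j) / Wpos (f i) (w i) (P i k j) (n k))
      else 0)"

lemma X0_lp: "X0 \<subseteq> lp p"
proof
  fix x assume "x \<in> X0"
  then obtain M :: nat where "\<forall>j. x j \<noteq> 0 \<longrightarrow> \<bar>j\<bar> \<le> int M" by (auto simp: X0_def)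
  thus "x \<in> lp p" by (intro lp_finite(1)[OF p1, of "{-int M..int M}"]) auto
qed

lemma common_bound:
  obtains B where "B \<ge> 0" "\<And>i m. i \<in> {1..N} \<Longrightarrow> norm (w i m) \<le> B"
proof -
  obtain Bi where Bi: "\<forall>i\<in>{1..N}. \<forall>m. norm (w i m) \<le> Bi i" using w_bdd by metis
  define B where "B = (\<Sum>i\<in>{1..N}. max 0 (Bi i))"
  have "norm (w i m) \<le> B" if "i \<in> {1..N}" for i m
  proof -
    have "norm (w i m) \<le> Bi i" using Bi that by blast
    hence "norm (w i m) \<le> max 0 (Bi i)" by simp
    also have "\<dots> \<le> B" unfolding B_def by (rule member_le_sum) (use that in auto)
    finally show ?thesis .
  qed
  moreover have "B \<ge> 0" unfolding B_def by (intro sum_nonneg) auto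
  ultimately show ?thesis using that by blast
qed

lemma crit_i:
  assumes x: "x \<in> X0" and i: "i \<in> {1..N}"
  shows "(\<lambda>k. lp_norm p ((T i ^^ n k) x)) \<longlonglongrightarrow> 0"
proof -
  obtain M :: nat where M: "\<forall>j. x j \<noteq> 0 \<longrightarrow> \<bar>j\<bar> \<le> int M" using x by (auto simp: X0_def)
  have fb: "bij (f i)" using f_bij i by auto
  define I where "I = {-int M..int M}"
  have bnd: "lp_norm p ((T i ^^ n k) x) \<le> (\<Sum>m\<in>I. norm (Wneg (f i) (w i) m (n k)) * norm (x m))" for k
  proof -
    have inj: "inj_on (\<lambda>m. P i k m) I"
      by (rule inj_onI) (metis inv_funpow_cancel(2)[OF fb])
    have "lp_norm p ((T i ^^ n k) x) \<le> (\<Sum>j\<in>(\<lambda>m. P i k m) ` I. norm ((T i ^^ n k) x j))"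
    proof (rule lp_finite(3)[OF p1])
      show "finite ((\<lambda>m. P i k m) ` I)" by (simp add: I_def)
      fix j assume j: "j \<notin> (\<lambda>m. P i k m) ` I"
      have "j = P i k ((f i ^^ n k) j)" using inv_funpow_cancel(1)[OF fb] by simp
      hence "(f i ^^ n k) j \<notin> I" using j by auto
      hence "x ((f i ^^ n k) j) = 0" using M by (auto simp: I_def abs_le_iff)
      thus "(T i ^^ n k) x j = 0" by (simp add: pseudo_shift_pow)
    qed
    also have "\<dots> = (\<Sum>m\<in>I. norm ((T i ^^ n k) x (P i k m)))"
      by (subst sum.reindex[OF inj]) simp
    also have "\<dots> = (\<Sum>m\<in>I. norm (Wneg (f i) (w i) m (n k)) * norm (x m))"
      by (rule sum.cong) (auto simp: pseudo_shift_pow inv_funpow_cancel(2)[OF fb] Wpos_Wneg[OF fb] norm_mult)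
    finally show ?thesis .
  qed
  have "(\<lambda>k. \<Sum>m\<in>I. norm (Wneg (f i) (w i) m (n k)) * norm (x m)) \<longlonglongrightarrow> 0"
    by (intro tendsto_null_sum tendsto_mult_left_zero) (use cond_a i in auto)
  thus ?thesis
  proof (rule Lim_null_comparison[rotated])
    show "\<forall>\<^sub>F k in sequentially. norm (lp_norm p ((T i ^^ n k) x)) \<le> (\<Sum>m\<in>I. norm (Wneg (f i) (w i) m (n k)) * norm (x m))"
      using bnd by (intro always_eventually allI) (simp add: abs_of_nonneg lp_norm_nonneg[OF p1])
  qed
qed


lemma X0_common:
  assumes "\<forall>i\<in>{1..N}. xs i \<in> X0"
  shows "\<exists>M::nat. \<forall>i\<in>{1..N}. \<forall>j. xs i j \<noteq> 0 \<longrightarrow> \<bar>j\<bar> \<le> int M"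
proof -
  have "\<forall>i\<in>{1..N}. \<exists>M::nat. \<forall>j. xs i j \<noteq> 0 \<longrightarrow> \<bar>j\<bar> \<le> int M"
    using assms by (simp add: X0_def)
  then obtain Mi where Mi: "\<forall>i\<in>{1..N}. \<forall>j. xs i j \<noteq> 0 \<longrightarrow> \<bar>j\<bar> \<le> int (Mi i)"
    by (rule bchoice_iff[THEN iffD1, elim_format]) blast
  have "\<bar>j\<bar> \<le> int (\<Sum>i\<in>{1..N}. Mi i)" if "i \<in> {1..N}" "xs i j \<noteq> 0" for i j
  proof -
    have "Mi i \<le> (\<Sum>i\<in>{1..N}. Mi i)" by (rule member_le_sum) (use that in auto)
    hence "int (Mi i) \<le> int (\<Sum>i\<in>{1..N}. Mi i)" by (rule of_nat_mono)
    moreover have "\<bar>j\<bar> \<le> int (Mi i)" using Mi that by blast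
    ultimately show ?thesis by linarith
  qed
  thus ?thesis by blast
qed

lemma Sk_char:
  obtains (zero) "Sk k xs J = 0" "\<forall>i\<in>{1..N}. xs i (P i k J) = 0"
  | (some) i where "i \<in> {1..N}" "xs i (P i k J) \<noteq> 0"
      "Sk k xs J = xs i (P i k J) / Wpos (f i) (w i) (P i k J) (n k)"
proof (cases "\<exists>i\<in>{1..N}. xs i (P i k J) \<noteq> 0")
  case False thus ?thesis using zero by (auto simp: Sk_def)
next
  case True
  define i where "i = (LEAST i. i \<in> {1..N} \<and> xs i (P i k J) \<noteq> 0)"
  have "i \<in> {1..N} \<and> xs i (P i k J) \<noteq> 0" unfolding i_def by (rule LeastI_ex) (use True in blast)
  moreover have "Sk k xs J = xs i (P i k J) / Wpos (f i) (w i) (P i k J) (n k)"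
    using True by (simp add: Sk_def i_def Let_def)
  ultimately show ?thesis using some by blast
qed

lemma Sk_support:
  assumes M: "\<forall>i\<in>{1..N}. \<forall>j. xs i j \<noteq> 0 \<longrightarrow> \<bar>j\<bar> \<le> int M"
    and J: "Sk k xs J \<noteq> 0"
  shows "J \<in> (\<Union>i\<in>{1..N}. (f i ^^ n k) ` {-int M..int M})"
proof (cases rule: Sk_char[of k xs J])
  case zero thus ?thesis using J by simp
next
  case (some i)
  have fb: "bij (f i)" using f_bij some(1) by auto
  have "J = (f i ^^ n k) (P i k J)" using inv_funpow_cancel(2)[OF fb] by simp
  moreover have "\<bar>P i k J\<bar> \<le> int M" using M some(1,2) by blast
  hence "P i k J \<in> {-int M..int M}" by (auto simp: abs_le_iff)
  ultimately show ?thesis using some(1) by blast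
qed

lemma card_F:
  "card (\<Union>i\<in>{1..N}. (f i ^^ n k) ` {-int M..int M}) \<le> N * (2*M+1)"
proof -
  have "card (\<Union>i\<in>{1..N}. (f i ^^ n k) ` {-int M..int M}) \<le> (\<Sum>i\<in>{1..N}. card ((f i ^^ n k) ` {-int M..int M}))"
    by (rule card_UN_le) simp
  also have "\<dots> \<le> (\<Sum>i\<in>{1..N}. 2*M+1)"
  proof (rule sum_mono)
    fix i
    have "card ((f i ^^ n k) ` {-int M..int M}) \<le> card {-int M..int M}" by (rule card_image_le) simp
    also have "\<dots> = 2*M+1" by (simp add: nat_add_distrib)
    finally show "card ((f i ^^ n k) ` {-int M..int M}) \<le> 2*M+1" .
  qed
  finally show ?thesis by simp
qed

lemma Sk_lp:
  assumes "\<forall>i\<in>{1..N}. xs i \<in> X0"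
  shows "Sk k xs \<in> lp p"
proof -
  obtain M :: nat where M: "\<forall>i\<in>{1..N}. \<forall>j. xs i j \<noteq> 0 \<longrightarrow> \<bar>j\<bar> \<le> int M"
    using X0_common[OF assms] by blast
  show ?thesis
  proof (rule lp_finite(1)[OF p1, of "\<Union>i\<in>{1..N}. (f i ^^ n k) ` {-int M..int M}"])
    fix j assume j: "j \<notin> (\<Union>i\<in>{1..N}. (f i ^^ n k) ` {-int M..int M})"
    show "Sk k xs j = 0"
    proof (rule ccontr)
      assume "Sk k xs j \<noteq> 0"
      hence "j \<in> (\<Union>i\<in>{1..N}. (f i ^^ n k) ` {-int M..int M})" by (rule Sk_support[OF M])
      thus False using j by contradiction
    qed
  qed simp
qed


lemma aux_div4: "(Q::real) \<noteq> 0 \<Longrightarrow> Q * (e / (4 * Q)) = e / 4"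
  by (simp add: field_simps)

lemma crit_ii:
  assumes e: "\<epsilon> > 0" and xs: "\<forall>i\<in>{1..N}. xs i \<in> X0"
  shows "\<exists>k\<ge>K. lp_norm p (Sk k xs) < \<epsilon> \<and>
           (\<forall>l\<in>{1..N}. lp_norm p (\<lambda>j. (T l ^^ n k) (Sk k xs) j - xs l j) < \<epsilon>)"
proof -
  obtain M :: nat where M: "\<forall>i\<in>{1..N}. \<forall>j. xs i j \<noteq> 0 \<longrightarrow> \<bar>j\<bar> \<le> int M"
    using X0_common[OF xs] by blast
  define I where "I = {-int M..int M}"
  have fI: "finite I" by (simp add: I_def)
  have cI: "card I = 2*M+1" by (simp add: I_def nat_add_distrib)
  define A where "A = (\<Sum>i\<in>{1..N}. \<Sum>j\<in>I. norm (xs i j))"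
  have A0: "A \<ge> 0" unfolding A_def by (intro sum_nonneg) auto
  have xA: "norm (xs i j) \<le> A" if i: "i \<in> {1..N}" for i j
  proof (cases "xs i j = 0")
    case True thus ?thesis using A0 by simp
  next
    case False
    have "\<bar>j\<bar> \<le> int M" using M i False by blast
    hence jI: "j \<in> I" by (auto simp: I_def abs_le_iff)
    have "norm (xs i j) \<le> (\<Sum>j\<in>I. norm (xs i j))" by (rule member_le_sum) (use jI fI in auto)
    also have "\<dots> \<le> A" unfolding A_def by (rule member_le_sum[of i]) (use i in \<open>auto intro: sum_nonneg\<close>)
    finally show ?thesis .
  qed
  define C :: real where "C = (2 * real M + 1) * (real N + 1)"
  have C0: "C \<ge> 0" by (simp add: C_def)
  define \<delta> where "\<delta> = \<epsilon> / (4 * (C + 1))"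
  define \<epsilon>' where "\<epsilon>' = \<epsilon> / (4 * (C + 1) * (A + 1))"
  define R where "R = 4 * (C + 1) * (A + 1) / \<epsilon>"
  have d0: "\<delta> > 0" and e0: "\<epsilon>' > 0" and R0: "R > 0"
    using e C0 A0 by (auto simp: \<delta>_def \<epsilon>'_def R_def)
  define a where "a i j = (if xs i j \<noteq> 0 then xs i j else of_real \<delta>)" for i j
  have anz: "\<forall>i\<in>{1..N}. \<forall>j\<in>{-int M..int M}. a i j \<noteq> 0" using d0 by (simp add: a_def)
  have ev: "eventually (\<lambda>k. \<forall>i\<in>{1..N}. \<forall>m\<in>I. R \<le> norm (Wpos (f i) (w i) m (n k))) sequentially"
  proof (intro eventually_ball_finite ballI)
    fix i m assume "i \<in> {1..N}" "m \<in> I"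
    thus "eventually (\<lambda>k. R \<le> norm (Wpos (f i) (w i) m (n k))) sequentially"
      using cond_a by (simp add: filterlim_at_top)
  qed (use fI in auto)
  then obtain K0 where K0: "\<forall>k\<ge>K0. \<forall>i\<in>{1..N}. \<forall>m\<in>I. R \<le> norm (Wpos (f i) (w i) m (n k))"
    by (auto simp: eventually_sequentially)
  obtain k where k: "k \<ge> max K K0" and Hk: "\<forall>i\<in>{1..N}. \<forall>l\<in>{1..N}. i \<noteq> l \<longrightarrow>
           (\<forall>j \<in> (f l ^^ n k) ` {-int M..int M} \<inter> (f i ^^ n k) ` (UNIV - {-int M..int M}).
              norm (Wpos (f i) (w i) ((inv (f i) ^^ n k) j) (n k)
                    / Wpos (f l) (w l) ((inv (f l) ^^ n k) j) (n k)) < \<epsilon>') \<and>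
           (\<forall>j \<in> (f l ^^ n k) ` {-int M..int M} \<inter> (f i ^^ n k) ` {-int M..int M}.
              norm (Wpos (f i) (w i) ((inv (f i) ^^ n k) j) (n k)
                    / Wpos (f l) (w l) ((inv (f l) ^^ n k) j) (n k)
                    - a i ((inv (f i) ^^ n k) j) / a l ((inv (f l) ^^ n k) j)) < \<epsilon>')"
    using cond_b e0 anz by blast
  have Wbig: "R \<le> norm (Wpos (f i) (w i) m (n k))" if "i \<in> {1..N}" "m \<in> I" for i m
    using K0 k that by auto
  have Wnz: "Wpos (f i) (w i) m (n k) \<noteq> 0" if "i \<in> {1..N}" for i m
    using w_nz that by (intro Wpos_nz) auto
  define F where "F = (\<Union>i\<in>{1..N}. (f i ^^ n k) ` I)"
  have fF: "finite F" by (simp add: F_def I_def)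
  have cF: "real (card F) \<le> real N * (2 * real M + 1)"
  proof -
    have "card F \<le> N*(2*M+1)" using card_F[of k M] by (simp add: F_def I_def)
    hence "real (card F) \<le> real (N*(2*M+1))" by (simp only: of_nat_le_iff)
    thus ?thesis by (simp add: algebra_simps)
  qed
  have ARe: "A / R = A * \<epsilon>'" by (simp add: R_def \<epsilon>'_def)
  have CA: "C * (A * \<epsilon>') \<le> \<epsilon> / 4"
  proof -
    have "C * A \<le> (C + 1) * (A + 1)" using C0 A0 by (intro mult_mono) auto
    hence "C * A * \<epsilon>' \<le> (C + 1) * (A + 1) * \<epsilon>'" using e0 by (intro mult_right_mono) auto
    also have "(C + 1) * (A + 1) * \<epsilon>' = \<epsilon> / 4"
    proof -
      have "(C + 1) * (A + 1) \<noteq> 0" using C0 A0 by auto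
      from aux_div4[OF this, of \<epsilon>] show ?thesis unfolding \<epsilon>'_def by (simp only: mult.assoc)
    qed
    finally show ?thesis by (simp add: mult.assoc)
  qed
  have Cd: "C * \<delta> \<le> \<epsilon> / 4"
  proof -
    have "C * \<delta> \<le> (C + 1) * \<delta>" using d0 by (intro mult_right_mono) auto
    also have "(C + 1) * \<delta> = \<epsilon> / 4"
    proof -
      have "C + 1 \<noteq> 0" using C0 by auto
      from aux_div4[OF this, of \<epsilon>] show ?thesis unfolding \<delta>_def by (simp only: mult.assoc)
    qed
    finally show ?thesis .
  qed
  have Snorm: "norm (Sk k xs J) \<le> A * \<epsilon>'" for J
  proof (cases rule: Sk_char[of k xs J])
    case zero thus ?thesis using A0 e0 by simp
  next
    case (some i)
    have "\<bar>P i k J\<bar> \<le> int M" using M some(1,2) by blast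
    hence mI: "P i k J \<in> I" by (auto simp: I_def abs_le_iff)
    have "norm (Sk k xs J) = norm (xs i (P i k J)) / norm (Wpos (f i) (w i) (P i k J) (n k))"
      using some(3) by (simp add: norm_divide)
    also have "\<dots> \<le> A / R"
      by (rule frac_le) (use A0 xA[OF some(1)] R0 Wbig[OF some(1) mI] in auto)
    finally show ?thesis using ARe by simp
  qed
  have Ssupp: "Sk k xs J = 0" if "J \<notin> F" for J
  proof (rule ccontr)
    assume "Sk k xs J \<noteq> 0"
    hence "J \<in> F" unfolding F_def I_def by (rule Sk_support[OF M])
    thus False using that by contradiction
  qed
  have "lp_norm p (Sk k xs) \<le> (\<Sum>J\<in>F. norm (Sk k xs J))"
    by (rule lp_finite(3)[OF p1 fF]) (use Ssupp in blast)
  also have "\<dots> \<le> of_nat (card F) * (A * \<epsilon>')" by (rule sum_bounded_above) (use Snorm in blast)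
  also have "\<dots> \<le> C * (A * \<epsilon>')"
  proof (rule mult_right_mono)
    show "real (card F) \<le> C" using cF by (simp add: C_def algebra_simps)
  qed (use A0 e0 in simp)
  also have "\<dots> < \<epsilon>" using CA e by simp
  finally have S_small: "lp_norm p (Sk k xs) < \<epsilon>" .
  have T_close: "lp_norm p (\<lambda>j. (T l ^^ n k) (Sk k xs) j - xs l j) < \<epsilon>" if l: "l \<in> {1..N}" for l
  proof -
    define D where "D = (\<lambda>j. (T l ^^ n k) (Sk k xs) j - xs l j)"
    have Deq: "D j = Wpos (f l) (w l) j (n k) * Sk k xs ((f l ^^ n k) j) - xs l j" for j
      by (simp add: D_def pseudo_shift_pow)
    have fbl: "bij (f l)" using f_bij l by auto
    have Dbound: "norm (D j) \<le> \<epsilon>' * A + \<delta>" for j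
    proof -
      define J where "J = (f l ^^ n k) j"
      have PJ: "P l k J = j" using inv_funpow_cancel(1)[OF fbl] by (simp add: J_def)
      show ?thesis
      proof (cases rule: Sk_char[of k xs J])
        case zero
        have "xs l (P l k J) = 0" using zero(2) l by blast
        hence "xs l j = 0" using PJ by simp
        hence "D j = 0" using zero(1) by (simp add: Deq J_def[symmetric])
        thus ?thesis using e0 d0 A0 by simp
      next
        case (some i)
        define m where "m = P i k J"
        have fbi: "bij (f i)" using f_bij some(1) by auto
        have Jm: "J = (f i ^^ n k) m" using inv_funpow_cancel(2)[OF fbi] by (simp add: m_def)
        have xm: "xs i m \<noteq> 0" using some(2) by (simp add: m_def)
        have "\<bar>m\<bar> \<le> int M" using M some(1) xm by blast
        hence mI: "m \<in> I" by (auto simp: I_def abs_le_iff)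
        have Dj: "D j = Wpos (f l) (w l) j (n k) * (xs i m / Wpos (f i) (w i) m (n k)) - xs l j"
          using some(3) by (simp add: Deq J_def[symmetric] m_def)
        show ?thesis
        proof (cases "i = l")
          case True
          hence "m = j" using PJ by (simp add: m_def)
          hence "D j = 0" using Dj True Wnz[OF l] by simp
          thus ?thesis using e0 d0 A0 by simp
        next
          case False
          have lni: "l \<noteq> i" using False by simp
          note H = Hk[rule_format, OF l some(1) lni]
          have J1: "J \<in> (f i ^^ n k) ` I" using Jm mI by blast
          show ?thesis
          proof (cases "\<bar>j\<bar> \<le> int M")
            case jM: True
            have J2: "J \<in> (f l ^^ n k) ` I" unfolding J_def by (rule imageI) (use jM in \<open>simp add: I_def abs_le_iff\<close>)
            have h: "norm (Wpos (f l) (w l) j (n k) / Wpos (f i) (w i) m (n k) - a l j / a i m) < \<epsilon>'"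
              using conjunct2[OF H] J1 J2 PJ unfolding I_def m_def by auto
            have aim: "a i m = xs i m" using xm by (simp add: a_def)
            define X where "X = Wpos (f l) (w l) j (n k) / Wpos (f i) (w i) m (n k) - a l j / a i m"
            have eqD: "D j = X * xs i m + (a l j - xs l j)"
              using Dj xm Wnz[OF some(1)] by (simp add: X_def aim field_simps)
            have "norm (D j) \<le> norm X * norm (xs i m) + norm (a l j - xs l j)"
              unfolding eqD using norm_triangle_ineq[of "X * xs i m" "a l j - xs l j"] by (simp only: norm_mult)
            also have "\<dots> \<le> \<epsilon>' * A + \<delta>"
            proof (rule add_mono)
              show "norm X * norm (xs i m) \<le> \<epsilon>' * A"
                using h xA[OF some(1), of m] e0 unfolding X_def by (intro mult_mono) auto
              show "norm (a l j - xs l j) \<le> \<delta>" using d0 by (cases "xs l j = 0") (auto simp: a_def)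
            qed
            finally show ?thesis .
          next
            case jM: False
            have xl: "xs l j = 0" using M l jM by blast
            have J2: "J \<in> (f l ^^ n k) ` (UNIV - I)" unfolding J_def by (rule imageI) (use jM in \<open>auto simp: I_def abs_le_iff\<close>)
            have h: "norm (Wpos (f l) (w l) j (n k) / Wpos (f i) (w i) m (n k)) < \<epsilon>'"
              using conjunct1[OF H] J1 J2 PJ unfolding I_def m_def by auto
            have "D j = (Wpos (f l) (w l) j (n k) / Wpos (f i) (w i) m (n k)) * xs i m"
              using Dj xl by simp
            hence "norm (D j) = norm (Wpos (f l) (w l) j (n k) / Wpos (f i) (w i) m (n k)) * norm (xs i m)"
              by (simp add: norm_mult norm_divide)
            also have "\<dots> \<le> \<epsilon>' * A" using h xA[OF some(1), of m] e0 by (intro mult_mono) auto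
            finally show ?thesis using d0 by simp
          qed
        qed
      qed
    qed
    define G where "G = I \<union> (\<lambda>J. P l k J) ` F"
    have fG: "finite G" using fI fF by (simp add: G_def)
    have Dsupp: "D j = 0" if "j \<notin> G" for j
    proof -
      have jI: "\<bar>j\<bar> > int M" using that by (auto simp: G_def I_def abs_le_iff)
      hence "xs l j = 0" using M l by force
      moreover have "(f l ^^ n k) j \<notin> F"
      proof
        assume "(f l ^^ n k) j \<in> F"
        hence "P l k ((f l ^^ n k) j) \<in> G" by (auto simp: G_def)
        thus False using that inv_funpow_cancel(1)[OF fbl] by simp
      qed
      ultimately show ?thesis using Ssupp by (simp add: Deq)
    qed
    have cG: "real (card G) \<le> C"
    proof -
      have "card G \<le> card I + card ((\<lambda>J. P l k J) ` F)" unfolding G_def by (rule card_Un_le)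
      also have "\<dots> \<le> card I + card F" by (simp add: card_image_le fF)
      finally have "real (card G) \<le> real (card I) + real (card F)" by linarith
      thus ?thesis using cI cF by (simp add: C_def algebra_simps)
    qed
    have "lp_norm p D \<le> (\<Sum>j\<in>G. norm (D j))"
      by (rule lp_finite(3)[OF p1 fG]) (use Dsupp in blast)
    also have "\<dots> \<le> of_nat (card G) * (\<epsilon>' * A + \<delta>)" by (rule sum_bounded_above) (use Dbound in blast)
    also have "\<dots> \<le> C * (\<epsilon>' * A + \<delta>)" using cG e0 d0 A0 by (intro mult_right_mono) auto
    also have "\<dots> = C * (A * \<epsilon>') + C * \<delta>" by (simp add: algebra_simps)
    also have "\<dots> < \<epsilon>" using CA Cd e by simp
    finally show ?thesis by (simp add: D_def)
  qed
  show ?thesis using k S_small T_close by (intro exI[of _ k]) auto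
qed


lemma X0_dense:
  assumes "y \<in> lp p" "\<epsilon> > 0"
  shows "\<exists>x\<in>X0. lp_norm p (\<lambda>j. x j - y j) < \<epsilon>"
proof -
  obtain D :: "(int \<Rightarrow> 'a) set" where D: "countable D" "D \<subseteq> lp p"
    "\<And>d. d \<in> D \<Longrightarrow> \<exists>M::nat. \<forall>j. d j \<noteq> 0 \<longrightarrow> \<bar>j\<bar> \<le> int M"
    "\<And>y \<epsilon>. y \<in> lp p \<Longrightarrow> \<epsilon> > 0 \<Longrightarrow> \<exists>d\<in>D. lp_norm p (\<lambda>j. d j - y j) < \<epsilon>"
    using lp_separable[OF p1] by blast
  have "D \<subseteq> X0" using D(3) by (auto simp: X0_def)
  thus ?thesis using D(4)[OF assms] by blast
qed

theorem dBC: "dBC_criterion p N (\<lambda>i. pseudo_shift (f i) (w i))"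
proof -
  obtain B where B: "B \<ge> 0" "\<And>i m. i \<in> {1..N} \<Longrightarrow> norm (w i m) \<le> B" using common_bound by blast
  have bl: "\<forall>i\<in>{1..N}. bounded_linear_lp p (T i)"
  proof
    fix i assume i: "i \<in> {1..N}"
    show "bounded_linear_lp p (T i)"
      by (rule shift_bounded_linear[OF p1, where B=B]) (use f_bij B(2) i in auto)
  qed
  show ?thesis unfolding dBC_criterion_def
  proof (intro conjI bl exI[of _ n] exI[of _ X0] exI[of _ Sk])
    show "strict_mono n" by (rule n_mono)
    show "\<forall>k. 0 < n k" by (rule n_pos)
    show "X0 \<subseteq> lp p" by (rule X0_lp)
    show "\<forall>y\<in>lp p. \<forall>\<epsilon>>0. \<exists>x\<in>X0. lp_norm p (\<lambda>j. x j - y j) < \<epsilon>" using X0_dense by blast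
    show "\<forall>k xs. (\<forall>i\<in>{1..N}. xs i \<in> X0) \<longrightarrow> Sk k xs \<in> lp p" using Sk_lp by blast
    show "\<forall>x\<in>X0. \<forall>i\<in>{1..N}. (\<lambda>k. lp_norm p ((T i ^^ n k) x)) \<longlonglongrightarrow> 0" using crit_i by blast
    show "\<forall>\<epsilon>>0. \<forall>K. \<forall>xs. (\<forall>i\<in>{1..N}. xs i \<in> X0) \<longrightarrow>
           (\<exists>k\<ge>K. lp_norm p (Sk k xs) < \<epsilon> \<and>
              (\<forall>i\<in>{1..N}. lp_norm p (\<lambda>j. (T i ^^ n k) (Sk k xs) j - xs i j) < \<epsilon>))"
      using crit_ii by blast
  qed
qed

end

lemma aux_half: "(1::real) / (2 * s) + 1 / (2 * s) = 1 / s"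
  by (cases "s = 0") (simp_all add: field_simps)

lemma finite_gap:
  assumes "finite I" "\<forall>i\<in>I. a i < (c::real)"
  shows "\<exists>g>0. \<forall>i\<in>I. a i + g \<le> c"
proof (cases "I = {}")
  case True thus ?thesis by (intro exI[of _ 1]) auto
next
  case False
  define g where "g = c - Max (a ` I)"
  have "Max (a ` I) \<in> a ` I" using assms False by (intro Max_in) auto
  hence "g > 0" using assms by (auto simp: g_def)
  moreover have "a i + g \<le> c" if "i \<in> I" for i
    using Max_ge[of "a ` I" "a i"] assms that by (auto simp: g_def)
  ultimately show ?thesis by blast
qed


context dset
begin

theorem dhc: "disjoint_hypercyclic p N (\<lambda>i. pseudo_shift (f i) (w i))"
proof -
  define d where "d x y = lp_norm p (\<lambda>j. x j - y j)" for x y :: "int \<Rightarrow> 'a"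
  have dzero: "d x y = 0 \<longleftrightarrow> x = y" if "x \<in> lp p" "y \<in> lp p" for x y
  proof
    assume "d x y = 0"
    hence "(\<lambda>j. x j - y j) = (\<lambda>j. 0)"
      using lp_zero[OF p1 lp_diff(1)[OF p1 that]] by (simp add: d_def)
    thus "x = y" by (auto simp: fun_eq_iff dest: fun_cong)
  qed (simp add: d_def lp_zero_fun[OF p1])
  interpret Ms: Metric_space "lp p" d
  proof
    show "0 \<le> d x y" for x y by (simp add: d_def lp_norm_nonneg[OF p1])
    show "d x y = d y x" for x y unfolding d_def by (rule lp_norm_commute[OF p1])
    show "d x y = 0 \<longleftrightarrow> x = y" if "x \<in> lp p" "y \<in> lp p" for x y using dzero[OF that] .
    show "d x z \<le> d x y + d y z" if "x \<in> lp p" "y \<in> lp p" "z \<in> lp p" for x y z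
      unfolding d_def by (rule lp_triangle[OF p1 that])
  qed
  have mc: "Ms.mcomplete"
    unfolding Ms.mcomplete_def Ms.MCauchy_def
  proof (intro allI impI)
    fix \<sigma> :: "nat \<Rightarrow> int \<Rightarrow> 'a"
    assume a: "range \<sigma> \<subseteq> lp p \<and> (\<forall>\<epsilon>>0. \<exists>N. \<forall>n n'. N \<le> n \<longrightarrow> N \<le> n' \<longrightarrow> d (\<sigma> n) (\<sigma> n') < \<epsilon>)"
    have s: "\<And>n. \<sigma> n \<in> lp p" using a by auto
    have C: "\<exists>N. \<forall>n n'. N \<le> n \<longrightarrow> N \<le> n' \<longrightarrow> lp_norm p (\<lambda>j. \<sigma> n j - \<sigma> n' j) < \<epsilon>"
      if "\<epsilon> > 0" for \<epsilon> using a that unfolding d_def by blast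
    obtain x where x: "x \<in> lp p" "\<forall>\<epsilon>>0. \<exists>N. \<forall>n\<ge>N. lp_norm p (\<lambda>j. \<sigma> n j - x j) < \<epsilon>"
      using lp_complete[OF p1 s C] by blast
    have "limitin Ms.mtopology \<sigma> x sequentially"
      unfolding Ms.limitin_metric
      using x s by (auto simp: d_def eventually_sequentially)
    thus "\<exists>x. limitin Ms.mtopology \<sigma> x sequentially" by blast
  qed
  obtain D :: "(int \<Rightarrow> 'a) set" where D: "countable D" "D \<subseteq> lp p"
    "\<And>d. d \<in> D \<Longrightarrow> \<exists>M::nat. \<forall>j. d j \<noteq> 0 \<longrightarrow> \<bar>j\<bar> \<le> int M"
    "\<And>y \<epsilon>. y \<in> lp p \<Longrightarrow> \<epsilon> > 0 \<Longrightarrow> \<exists>d\<in>D. lp_norm p (\<lambda>j. d j - y j) < \<epsilon>"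
    using lp_separable[OF p1] by blast
  have DX0: "D \<subseteq> X0" using D(3) by (auto simp: X0_def)
  obtain B where B: "B \<ge> 0" "\<And>i m. i \<in> {1..N} \<Longrightarrow> norm (w i m) \<le> B" using common_bound by blast
  have Tlp: "(T i ^^ m) x \<in> lp p" and Tb: "lp_norm p ((T i ^^ m) x) \<le> B ^ m * lp_norm p x"
    if "i \<in> {1..N}" "x \<in> lp p" for i m x
    using shift_pow_bound[OF p1, where w="w i" and B=B and f="f i", OF _ _ that(2)] f_bij B(2) that(1) by auto
  define TD where "TD = Pi\<^sub>E {1..N} (\<lambda>_. D)"
  define U where "U t r = {x \<in> lp p. \<exists>m. \<forall>i\<in>{1..N}. lp_norm p (\<lambda>j. (T i ^^ m) x j - t i j) < 1 / real (Suc r)}"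
    for t :: "nat \<Rightarrow> int \<Rightarrow> 'a" and r :: nat
  define \<G> where "\<G> = (\<lambda>(t, r). U t r) ` (TD \<times> UNIV)"
  have cG: "countable \<G>" unfolding \<G>_def TD_def
    by (intro countable_image countable_SIGMA countable_PiE) (auto simp: D(1))
  have tlp: "t i \<in> lp p" if "t \<in> TD" "i \<in> {1..N}" for t i using that D(2) by (auto simp: TD_def)
  have opn: "openin Ms.mtopology (U t r)" if t: "t \<in> TD" for t r
    unfolding Ms.openin_mtopology
  proof (intro conjI allI impI)
    show "U t r \<subseteq> lp p" by (auto simp: U_def)
    fix x assume x: "x \<in> U t r"
    then obtain m where xl: "x \<in> lp p" and m: "\<forall>i\<in>{1..N}. lp_norm p (\<lambda>j. (T i ^^ m) x j - t i j) < 1 / real (Suc r)"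
      by (auto simp: U_def)
    obtain g where g: "g > 0" "\<forall>i\<in>{1..N}. lp_norm p (\<lambda>j. (T i ^^ m) x j - t i j) + g \<le> 1 / real (Suc r)"
      using finite_gap[OF _ m] by auto
    define \<rho> where "\<rho> = g / (B ^ m + 1)"
    have \<rho>: "\<rho> > 0" using g B by (simp add: \<rho>_def add_nonneg_pos)
    have "Ms.mball x \<rho> \<subseteq> U t r"
    proof
      fix y assume "y \<in> Ms.mball x \<rho>"
      hence yl: "y \<in> lp p" and dxy: "d x y < \<rho>" by auto
      have "lp_norm p (\<lambda>j. (T i ^^ m) y j - t i j) < 1 / real (Suc r)" if i: "i \<in> {1..N}" for i
      proof -
        have t1: "lp_norm p (\<lambda>j. (T i ^^ m) y j - t i j) \<le>
              lp_norm p (\<lambda>j. (T i ^^ m) y j - (T i ^^ m) x j) + lp_norm p (\<lambda>j. (T i ^^ m) x j - t i j)"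
          by (rule lp_triangle[OF p1]) (use Tlp i xl yl tlp t in auto)
        have "lp_norm p (\<lambda>j. (T i ^^ m) y j - (T i ^^ m) x j) = lp_norm p ((T i ^^ m) (\<lambda>j. y j - x j))"
          by (simp only: shift_pow_diff[OF p1])
        also have "\<dots> \<le> B ^ m * lp_norm p (\<lambda>j. y j - x j)"
          by (rule Tb[OF i lp_diff(1)[OF p1 yl xl]])
        also have "lp_norm p (\<lambda>j. y j - x j) = d x y" unfolding d_def by (rule lp_norm_commute[OF p1])
        finally have t2: "lp_norm p (\<lambda>j. (T i ^^ m) y j - (T i ^^ m) x j) \<le> B ^ m * d x y" .
        have a: "lp_norm p (\<lambda>j. (T i ^^ m) y j - t i j) \<le> B ^ m * d x y + lp_norm p (\<lambda>j. (T i ^^ m) x j - t i j)"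
          using t1 t2 by linarith
        have "B ^ m * d x y \<le> B ^ m * \<rho>" using dxy B by (intro mult_left_mono) auto
        also have "B ^ m * \<rho> < g"
        proof -
          have "B ^ m * \<rho> = g * (B ^ m / (B ^ m + 1))" by (simp add: \<rho>_def)
          also have "\<dots> < g * 1"
          proof (rule mult_strict_left_mono)
            have bm: "0 \<le> B ^ m" using B(1) by simp
            hence "0 < B ^ m + 1" by simp
            thus "B ^ m / (B ^ m + 1) < 1" by (simp add: divide_less_eq_1_pos)
          qed (use g in auto)
          finally show ?thesis by simp
        qed
        finally have b: "B ^ m * d x y < g" .
        have "lp_norm p (\<lambda>j. (T i ^^ m) x j - t i j) + g \<le> 1 / real (Suc r)" using g(2) i by blast
        thus ?thesis using a b by linarith
      qed
      thus "y \<in> U t r" unfolding U_def using yl by (intro CollectI conjI exI[of _ m] ballI) auto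
    qed
    thus "\<exists>r'>0. Ms.mball x r' \<subseteq> U t r" using \<rho> by blast
  qed
  have dns: "Ms.mtopology closure_of (U t r) = lp p" if t: "t \<in> TD" for t r
    unfolding Ms.metric_closure_of
  proof (intro equalityI subsetI)
    fix x assume "x \<in> {x \<in> lp p. \<forall>\<rho>>0. \<exists>y\<in>U t r. y \<in> Ms.mball x \<rho>}"
    thus "x \<in> lp p" by simp
  next
    fix x :: "int \<Rightarrow> 'a" assume xl: "x \<in> lp p"
    have "\<exists>y\<in>U t r. y \<in> Ms.mball x \<rho>" if \<rho>: "\<rho> > 0" for \<rho>
    proof -
      define \<eta> where "\<eta> = 1 / (2 * real (Suc r))"
      have \<eta>: "\<eta> > 0" by (simp add: \<eta>_def)
      obtain x0 where x0: "x0 \<in> X0" "lp_norm p (\<lambda>j. x0 j - x j) < \<rho>/2" using X0_dense[OF xl, of "\<rho>/2"] \<rho> by auto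
      have x0l: "x0 \<in> lp p" using x0 X0_lp by auto
      have "eventually (\<lambda>k. \<forall>i\<in>{1..N}. lp_norm p ((T i ^^ n k) x0) < \<eta>) sequentially"
        by (intro eventually_ball_finite ballI order_tendstoD(2)[OF crit_i[OF x0(1)] \<eta>]) auto
      then obtain K where K: "\<forall>k\<ge>K. \<forall>i\<in>{1..N}. lp_norm p ((T i ^^ n k) x0) < \<eta>"
        by (auto simp: eventually_sequentially)
      have tX: "\<forall>i\<in>{1..N}. t i \<in> X0" using t DX0 by (auto simp: TD_def)
      obtain k where k: "k \<ge> K" "lp_norm p (Sk k t) < min (\<rho>/2) \<eta>"
        "\<forall>i\<in>{1..N}. lp_norm p (\<lambda>j. (T i ^^ n k) (Sk k t) j - t i j) < min (\<rho>/2) \<eta>"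
        using crit_ii[OF _ tX, of "min (\<rho>/2) \<eta>" K] \<rho> \<eta> by auto
      have Sl: "Sk k t \<in> lp p" using Sk_lp[OF tX] .
      define y where "y = (\<lambda>j. x0 j + Sk k t j)"
      have yl: "y \<in> lp p" unfolding y_def by (rule minkowski(1)[OF p1 x0l Sl])
      have "d x y \<le> lp_norm p (\<lambda>j. x j - x0 j) + lp_norm p (\<lambda>j. x0 j - y j)"
        unfolding d_def by (rule lp_triangle[OF p1 xl x0l yl])
      also have "lp_norm p (\<lambda>j. x0 j - y j) = lp_norm p (Sk k t)"
        using lp_minus(2)[OF p1, of "Sk k t"] by (simp add: y_def)
      also have "lp_norm p (\<lambda>j. x j - x0 j) = lp_norm p (\<lambda>j. x0 j - x j)" by (rule lp_norm_commute[OF p1])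
      finally have dxy: "d x y < \<rho>" using x0(2) k(2) by linarith
      have "lp_norm p (\<lambda>j. (T i ^^ n k) y j - t i j) < 1 / real (Suc r)" if i: "i \<in> {1..N}" for i
      proof -
        have e: "(\<lambda>j. (T i ^^ n k) y j - t i j) = (\<lambda>j. (T i ^^ n k) x0 j + ((T i ^^ n k) (Sk k t) j - t i j))"
          unfolding y_def by (simp add: pseudo_shift_pow algebra_simps)
        have "lp_norm p (\<lambda>j. (T i ^^ n k) y j - t i j) \<le> lp_norm p ((T i ^^ n k) x0) + lp_norm p (\<lambda>j. (T i ^^ n k) (Sk k t) j - t i j)"
          unfolding e by (rule minkowski(2)[OF p1]) (use Tlp[OF i] x0l Sl tlp[OF t i] lp_diff(1)[OF p1] in auto)
        also have "\<dots> < \<eta> + \<eta>"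
        proof (rule add_strict_mono)
          show "lp_norm p ((T i ^^ n k) x0) < \<eta>" using K k(1) i by blast
          have "lp_norm p (\<lambda>j. (T i ^^ n k) (Sk k t) j - t i j) < min (\<rho>/2) \<eta>" using k(3) i by blast
          thus "lp_norm p (\<lambda>j. (T i ^^ n k) (Sk k t) j - t i j) < \<eta>" by simp
        qed
        also have "\<eta> + \<eta> = 1 / real (Suc r)" unfolding \<eta>_def by (rule aux_half)
        finally show ?thesis .
      qed
      hence "y \<in> U t r" unfolding U_def using yl by (intro CollectI conjI exI[of _ "n k"] ballI) auto
      moreover have "y \<in> Ms.mball x \<rho>" using xl yl dxy by simp
      ultimately show ?thesis by blast
    qed
    thus "x \<in> {x \<in> lp p. \<forall>\<rho>>0. \<exists>y\<in>U t r. y \<in> Ms.mball x \<rho>}" using xl by blast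
  qed
  have "Ms.mtopology closure_of \<Inter>\<G> = lp p"
    by (rule Ms.metric_Baire_category[OF mc cG]) (auto simp: \<G>_def opn dns)
  moreover have "(\<lambda>j. 0::'a) \<in> lp p" by (rule lp_zero_fun[OF p1])
  ultimately have "lp p \<inter> \<Inter>\<G> \<noteq> {}"
  proof -
    assume c: "Ms.mtopology closure_of \<Inter>\<G> = lp p" and z: "(\<lambda>j. 0::'a) \<in> lp p"
    show ?thesis
    proof
      assume "lp p \<inter> \<Inter>\<G> = {}"
      hence "Ms.mtopology closure_of \<Inter>\<G> = {}"
        using closure_of_restrict[of Ms.mtopology "\<Inter>\<G>"] by (simp add: Ms.topspace_mtopology)
      moreover have "(\<lambda>j. 0::'a) \<in> Ms.mtopology closure_of \<Inter>\<G>" by (subst c) (rule z)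
      ultimately show False by simp
    qed
  qed
  then obtain x where xl: "x \<in> lp p" and xG: "x \<in> \<Inter>\<G>" by blast
  show ?thesis unfolding disjoint_hypercyclic_def
  proof (intro bexI[OF _ xl] allI impI)
    fix y :: "nat \<Rightarrow> int \<Rightarrow> 'a" and \<epsilon> :: real
    assume y: "\<forall>i\<in>{1..N}. y i \<in> lp p" and e: "\<epsilon> > 0"
    define t where "t = restrict (\<lambda>i. SOME d. d \<in> D \<and> lp_norm p (\<lambda>j. d j - y i j) < \<epsilon>/2) {1..N}"
    have ti: "t i \<in> D \<and> lp_norm p (\<lambda>j. t i j - y i j) < \<epsilon>/2" if i: "i \<in> {1..N}" for i
    proof -
      have "\<exists>d. d \<in> D \<and> lp_norm p (\<lambda>j. d j - y i j) < \<epsilon>/2" using D(4)[of "y i" "\<epsilon>/2"] y i e by auto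
      hence "(SOME d. d \<in> D \<and> lp_norm p (\<lambda>j. d j - y i j) < \<epsilon>/2) \<in> D \<and>
             lp_norm p (\<lambda>j. (SOME d. d \<in> D \<and> lp_norm p (\<lambda>j. d j - y i j) < \<epsilon>/2) j - y i j) < \<epsilon>/2"
        by (rule someI_ex)
      thus ?thesis using i by (simp add: t_def)
    qed
    have tT: "t \<in> TD" using ti by (auto simp: TD_def t_def)
    obtain r where r: "inverse (real (Suc r)) < \<epsilon>/2" using reals_Archimedean[of "\<epsilon>/2"] e by auto
    have "x \<in> U t r" using xG tT by (auto simp: \<G>_def)
    then obtain m where m: "\<forall>i\<in>{1..N}. lp_norm p (\<lambda>j. (T i ^^ m) x j - t i j) < 1 / real (Suc r)"
      by (auto simp: U_def)
    have "lp_norm p (\<lambda>j. (T i ^^ m) x j - y i j) < \<epsilon>" if i: "i \<in> {1..N}" for i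
    proof -
      have "lp_norm p (\<lambda>j. (T i ^^ m) x j - y i j) \<le> lp_norm p (\<lambda>j. (T i ^^ m) x j - t i j) + lp_norm p (\<lambda>j. t i j - y i j)"
        by (rule lp_triangle[OF p1]) (use Tlp[OF i xl] ti[OF i] D(2) y i in auto)
      also have "\<dots> < 1 / real (Suc r) + \<epsilon>/2" using m ti[OF i] i by (intro add_strict_mono) auto
      also have "\<dots> < \<epsilon>" using r by (simp add: inverse_eq_divide)
      finally show ?thesis .
    qed
    thus "\<exists>n. \<forall>i\<in>{1..N}. lp_norm p (\<lambda>j. ((\<lambda>i. pseudo_shift (f i) (w i)) i ^^ n) x j - y i j) < \<epsilon>"
      by (intro exI[of _ m]) simp
  qed
qed

end

theorem theorem2p4:
  fixes p :: real and N :: nat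
    and f :: "nat \<Rightarrow> int \<Rightarrow> int"
    and w :: "nat \<Rightarrow> int \<Rightarrow> 'a::{real_normed_field, banach}"
    and n :: "nat \<Rightarrow> nat"
  assumes p: "1 \<le> p"
    and N: "N > 2"
    and f_bij: "\<forall>i\<in>{1..N}. bij (f i)"
    and w_bdd: "\<forall>i\<in>{1..N}. \<exists>B. \<forall>m. norm (w i m) \<le> B"
    and w_nz: "\<forall>i\<in>{1..N}. \<forall>m. w i m \<noteq> 0"
    and n_mono: "strict_mono n"
    and n_pos: "\<forall>k. 0 < n k"
    and cond_a: "\<forall>i\<in>{1..N}. \<forall>m.
        filterlim (\<lambda>k. norm (Wpos (f i) (w i) m (n k))) at_top sequentially \<and>
        (\<lambda>k. norm (Wneg (f i) (w i) m (n k))) \<longlonglongrightarrow> 0"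
    and cond_b: "\<forall>\<epsilon>>0. \<forall>(K::nat) (M::nat) (a::nat \<Rightarrow> int \<Rightarrow> 'a).
        (\<forall>i\<in>{1..N}. \<forall>j\<in>{-int M..int M}. a i j \<noteq> 0) \<longrightarrow>
        (\<exists>k\<ge>K. \<forall>i\<in>{1..N}. \<forall>l\<in>{1..N}. i \<noteq> l \<longrightarrow>
           (\<forall>j \<in> (f l ^^ n k) ` {-int M..int M} \<inter> (f i ^^ n k) ` (UNIV - {-int M..int M}).
              norm (Wpos (f i) (w i) ((inv (f i) ^^ n k) j) (n k)
                    / Wpos (f l) (w l) ((inv (f l) ^^ n k) j) (n k)) < \<epsilon>) \<and>
           (\<forall>j \<in> (f l ^^ n k) ` {-int M..int M} \<inter> (f i ^^ n k) ` {-int M..int M}.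
              norm (Wpos (f i) (w i) ((inv (f i) ^^ n k) j) (n k)
                    / Wpos (f l) (w l) ((inv (f l) ^^ n k) j) (n k)
                    - a i ((inv (f i) ^^ n k) j) / a l ((inv (f l) ^^ n k) j)) < \<epsilon>))"
  shows "dBC_criterion p N (\<lambda>i. pseudo_shift (f i) (w i))
       \<and> disjoint_hypercyclic p N (\<lambda>i. pseudo_shift (f i) (w i))"
proof -
  have ds: "dset p N f w n"
    unfolding dset_def by (intro conjI p f_bij w_bdd w_nz n_mono n_pos cond_a cond_b)
  show ?thesis using dset.dBC[OF ds] dset.dhc[OF ds] by (rule conjI)
qed

end
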